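(* Let $\mathcal{X}$ be finite, let $U=(U_n)_{n\ge1}$ be a channel sequence with $U_n:\mathcal{X}^n\rightsquigarrow\mathcal{Y}_n$ ($\mathcal{Y}_n$ countable), let $f_n:\mathcal{Y}_n\to\mathcal{Z}_n$ be functions, and let $V=(V_n)$ with $V_n=f_n(U_n):\mathcal{X}^n\rightsquigarrow\mathcal{Z}_n$. Let $\Phi_n=\log_2\max_{z\in\mathcal{Z}_n}|f_n^{-1}(z)|$ and suppose $\Phi_n/n\to0$. Then $\mathbf{C}(U)=\mathbf{C}(V)$. If, furthermore, at least one of $\mathbf{I}(U)$, $\mathbf{I}(V)$ exists, then both exist and $\mathbf{I}(U)=\mathbf{I}(V)$. Moreover, $U$ is strictly information stable if and only if $V$ is strictly information stable.
   Context: A channel $W:\mathcal{A}\rightsquigarrow\mathcal{B}$ is a family of probability distributions $W(\cdot|a)$ on $\mathcal{B}$; for a function $f:\mathcal{B}\to\mathcal{C}$, $f(W):\mathcal{A}\rightsquigarrow\mathcal{C}$ is the channel $f(W)(c|a)=\sum_{b\in f^{-1}(c)}W(b|a)$. For a distribution $p$: $p\circ W(a,b)=p(a)W(b|a)$, $p\bullet W(b)=\sum_a p\circ W(a,b)$; $\mathbf{i}(W,p,a,b)=\log_2\frac{W(b|a)}{p\bullet W(b)}$ if $W(b|a)>0$ and $p\bullet W(b)>0$, else $0$; $\mathbf{I}(W,p)=\mathbb{E}_{p\circ W}[\mathbf{i}]$, $\mathbf{I}(W)=\max_p\mathbf{I}(W,p)$. For a channel sequence $V$, $\mathbf{I}(V)=\lim_n\mathbf{I}(V_n)/n$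 when the limit exists. A $(W,M,\varepsilon)$-coding scheme: $M$ distinct inputs $x_1,\dots,x_M$ and disjoint output sets $\mathcal{R}_1,\dots,\mathcal{R}_M$ with $\sum_{y\notin\mathcal{R}_i}W(y|x_i)\le\varepsilon$ for all $i$. $R\ge0$ is achievable if for each $\varepsilon>0$ there is $n_0$ with a $(V_n,\lceil2^{nR}\rceil,\varepsilon)$-coding scheme for all $n\ge n_0$; $\mathbf{C}(V)$ is the supremum of achievable rates. $V$ is strictly information stable if $\mathbf{I}(V)$ exists and there are distributions $p^*_n$ on $\mathcal{X}^n$ with $\lim_n\Pr_{p^*_n\circ V_n}\big[|\mathbf{i}(V_n,p^*_n,x,y)/n-\mathbf{I}(V)|>\delta\big]=0$ for every $\delta>0$. *)

theory Defs
  imports "HOL-Analysis.Analysis"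
begin

text \<open>Channels W : A ~> B are represented as functions W :: 'a => 'b => real,
  W a b = W(b|a), together with an explicit input set A and output set B.\<close>

definition is_channel :: "('a \<Rightarrow> 'b \<Rightarrow> real) \<Rightarrow> 'a set \<Rightarrow> 'b set \<Rightarrow> bool" where
  "is_channel W A B \<longleftrightarrow> countable B \<and>
     (\<forall>a\<in>A. (\<forall>b. 0 \<le> W a b) \<and> (\<forall>b. b \<notin> B \<longrightarrow> W a b = 0) \<and> (W a has_sum 1) B)"

definition image_channel :: "('b \<Rightarrow> 'c) \<Rightarrow> 'b set \<Rightarrow> ('a \<Rightarrow> 'b \<Rightarrow> real) \<Rightarrow> 'a \<Rightarrow> 'c \<Rightarrow> real" where
  "image_channel f B W a c = (\<Sum>\<^sub>\<infinity>b\<in>{b\<in>B. f b = c}. W a b)"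

definition is_dist :: "('a \<Rightarrow> real) \<Rightarrow> 'a set \<Rightarrow> bool" where
  "is_dist p A \<longleftrightarrow> (\<forall>a\<in>A. 0 \<le> p a) \<and> sum p A = 1"

definition out_dist :: "('a \<Rightarrow> 'b \<Rightarrow> real) \<Rightarrow> ('a \<Rightarrow> real) \<Rightarrow> 'a set \<Rightarrow> 'b \<Rightarrow> real" where
  "out_dist W p A b = (\<Sum>a\<in>A. p a * W a b)"

definition info_dens :: "('a \<Rightarrow> 'b \<Rightarrow> real) \<Rightarrow> ('a \<Rightarrow> real) \<Rightarrow> 'a set \<Rightarrow> 'a \<Rightarrow> 'b \<Rightarrow> real" where
  "info_dens W p A a b =
     (if W a b > 0 \<and> out_dist W p A b > 0 then log 2 (W a b / out_dist W p A b) else 0)"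

definition mutual_info :: "('a \<Rightarrow> 'b \<Rightarrow> real) \<Rightarrow> ('a \<Rightarrow> real) \<Rightarrow> 'a set \<Rightarrow> 'b set \<Rightarrow> real" where
  "mutual_info W p A B = (\<Sum>\<^sub>\<infinity>(a,b)\<in>A \<times> B. p a * W a b * info_dens W p A a b)"

text \<open>I(W) = max over input distributions (written as Sup; the max is attained).\<close>
definition max_info :: "('a \<Rightarrow> 'b \<Rightarrow> real) \<Rightarrow> 'a set \<Rightarrow> 'b set \<Rightarrow> real" where
  "max_info W A B = Sup {mutual_info W p A B | p. is_dist p A}"

definition inputs :: "nat \<Rightarrow> 'x list set" where
  "inputs n = {xs. length xs = n}"

definition info_rate_exists :: "(nat \<Rightarrow> 'x list \<Rightarrow> 'b \<Rightarrow> real) \<Rightarrow> (nat \<Rightarrow> 'b set) \<Rightarrow> bool" where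
  "info_rate_exists V B \<longleftrightarrow> convergent (\<lambda>n. max_info (V n) (inputs n) (B n) / real n)"

definition info_rate :: "(nat \<Rightarrow> 'x list \<Rightarrow> 'b \<Rightarrow> real) \<Rightarrow> (nat \<Rightarrow> 'b set) \<Rightarrow> real" where
  "info_rate V B = lim (\<lambda>n. max_info (V n) (inputs n) (B n) / real n)"

definition coding_scheme :: "('a \<Rightarrow> 'b \<Rightarrow> real) \<Rightarrow> 'a set \<Rightarrow> 'b set \<Rightarrow> nat \<Rightarrow> real \<Rightarrow> bool" where
  "coding_scheme W A B M \<epsilon> \<longleftrightarrow> (\<exists>(x :: nat \<Rightarrow> 'a) (R :: nat \<Rightarrow> 'b set).
      inj_on x {..<M} \<and> (\<forall>i<M. x i \<in> A \<and> R i \<subseteq> B) \<and> disjoint_family_on R {..<M} \<and>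
      (\<forall>i<M. (\<Sum>\<^sub>\<infinity>y\<in>B - R i. W (x i) y) \<le> \<epsilon>))"

definition achievable :: "(nat \<Rightarrow> 'x list \<Rightarrow> 'b \<Rightarrow> real) \<Rightarrow> (nat \<Rightarrow> 'b set) \<Rightarrow> real \<Rightarrow> bool" where
  "achievable V B R \<longleftrightarrow> 0 \<le> R \<and> (\<forall>\<epsilon>>0. \<exists>n0. \<forall>n\<ge>n0.
      coding_scheme (V n) (inputs n) (B n) (nat \<lceil>2 powr (real n * R)\<rceil>) \<epsilon>)"

definition capacity :: "(nat \<Rightarrow> 'x list \<Rightarrow> 'b \<Rightarrow> real) \<Rightarrow> (nat \<Rightarrow> 'b set) \<Rightarrow> real" where
  "capacity V B = Sup {R. achievable V B R}"

definition strictly_info_stable :: "(nat \<Rightarrow> 'x list \<Rightarrow> 'b \<Rightarrow> real) \<Rightarrow> (nat \<Rightarrow> 'b set) \<Rightarrow> bool" where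
  "strictly_info_stable V B \<longleftrightarrow> info_rate_exists V B \<and>
     (\<exists>p :: nat \<Rightarrow> 'x list \<Rightarrow> real. (\<forall>n. is_dist (p n) (inputs n)) \<and>
        (\<forall>\<delta>>0. (\<lambda>n. \<Sum>\<^sub>\<infinity>(x,y)\<in>{(x,y)\<in>inputs n \<times> B n.
              \<bar>info_dens (V n) (p n) (inputs n) x y / real n - info_rate V B\<bar> > \<delta>}.
              p n x * V n x y) \<longlonglongrightarrow> 0))"

definition Phi :: "('b \<Rightarrow> 'c) \<Rightarrow> 'b set \<Rightarrow> real" where
  "Phi f B = log 2 (real (Max ((\<lambda>z. card {y\<in>B. f y = z}) ` (f ` B))))"

end

theory Submission
  imports Defs
begin

lemma has_sum_sum_fin:
  fixes g :: "'i \<Rightarrow> 'a \<Rightarrow> real"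
  assumes "finite I" "\<And>i. i \<in> I \<Longrightarrow> (g i has_sum s i) S"
  shows "((\<lambda>y. \<Sum>i\<in>I. g i y) has_sum (\<Sum>i\<in>I. s i)) S"
  using assms
proof (induction I rule: finite_induct)
  case empty then show ?case by simp
next
  case (insert a I)
  then show ?case by (simp add: has_sum_add)
qed

lemma has_sum_diff_real:
  fixes f g :: "'a \<Rightarrow> real"
  assumes "(f has_sum a) A" "(g has_sum b) A"
  shows "((\<lambda>x. f x - g x) has_sum (a - b)) A"
  using has_sum_add[OF assms(1) has_sum_uminusI[OF assms(2)]] by simp

lemma has_sum_regroup:
  fixes g :: "'s \<Rightarrow> real"
  assumes "(g has_sum s) S" "\<And>z. finite {x\<in>S. h x = z}"
  shows "((\<lambda>z. sum g {x\<in>S. h x = z}) has_sum s) (h ` S)"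
proof -
  have bij: "bij_betw (\<lambda>x. (h x, x)) S (Sigma (h ` S) (\<lambda>z. {x\<in>S. h x = z}))"
    by (auto simp: bij_betw_def inj_on_def image_iff)
  have "(g has_sum s) S" using assms(1) by simp
  hence "((\<lambda>p. g (snd p)) has_sum s) (Sigma (h ` S) (\<lambda>z. {x\<in>S. h x = z}))"
    using has_sum_reindex_bij_betw[OF bij, of "\<lambda>p. g (snd p)"] assms(1) by simp
  then show ?thesis
    by (rule has_sum_Sigma') (use assms(2) in \<open>auto intro: has_sum_finiteI\<close>)
qed

locale chanp =
  fixes W :: "'a \<Rightarrow> 'b \<Rightarrow> real" and A :: "'a set" and B :: "'b set" and p :: "'a \<Rightarrow> real"
  assumes finA: "finite A" and ch: "is_channel W A B" and dist: "is_dist p A"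
begin

lemma W_nn: "x \<in> A \<Longrightarrow> 0 \<le> W x y"
  using ch by (simp add: is_channel_def)
lemma W_out: "x \<in> A \<Longrightarrow> y \<notin> B \<Longrightarrow> W x y = 0"
  using ch by (simp add: is_channel_def)
lemma W_sum: "x \<in> A \<Longrightarrow> (W x has_sum 1) B"
  using ch by (simp add: is_channel_def)
lemma p_nn: "x \<in> A \<Longrightarrow> 0 \<le> p x"
  using dist by (simp add: is_dist_def)
lemma p_sum: "sum p A = 1"
  using dist by (simp add: is_dist_def)
lemma p_le1: "x \<in> A \<Longrightarrow> p x \<le> 1"
  using member_le_sum[of x A p] p_nn finA p_sum by simp

abbreviation "out \<equiv> out_dist W p A"

lemma out_nn: "0 \<le> out y"
  unfolding out_dist_def by (intro sum_nonneg) (simp add: p_nn W_nn)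

lemma pW_le_out: "x \<in> A \<Longrightarrow> p x * W x y \<le> out y"
  unfolding out_dist_def
  by (rule member_le_sum) (auto simp: p_nn W_nn finA)

lemma out_sum: "(out has_sum 1) B"
proof -
  have "((\<lambda>y. \<Sum>x\<in>A. p x * W x y) has_sum (\<Sum>x\<in>A. p x * 1)) B"
    by (rule has_sum_sum_fin[OF finA]) (intro has_sum_cmult_right W_sum, simp)
  moreover have "out = (\<lambda>y. \<Sum>x\<in>A. p x * W x y)" by (rule ext) (simp add: out_dist_def)
  ultimately show ?thesis by (simp add: p_sum)
qed

lemma term_bound:
  assumes x: "x \<in> A"
  shows "\<bar>p x * W x y * info_dens W p A x y\<bar> \<le> 2 * (W x y + out y)"
proof (cases "W x y > 0 \<and> out y > 0 \<and> p x > 0")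
  case False
  have "p x * W x y * info_dens W p A x y = 0"
    using False p_nn[OF x] W_nn[OF x] by (auto simp: info_dens_def)
  then have "\<bar>p x * W x y * info_dens W p A x y\<bar> = 0" by (simp only: abs_zero)
  moreover have "0 \<le> 2 * (W x y + out y)" using out_nn[of y] W_nn[OF x, of y] by simp
  ultimately show ?thesis by metis
next
  case True
  define r where "r = W x y / out y"
  have r: "r > 0" using True by (simp add: r_def)
  have id: "info_dens W p A x y = ln r / ln 2"
    using True by (simp add: info_dens_def r_def log_def)
  have le1: "p x \<le> 1" using p_le1[OF x] .
  have pw: "p x * W x y \<le> out y" using pW_le_out[OF x] .
  have up: "p x * W x y * ln r \<le> W x y + out y"
  proof -
    have "p x * W x y * ln r \<le> p x * W x y * (r - 1)"
      using ln_le_minus_one[OF r] True by (intro mult_left_mono) auto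
    also have "\<dots> \<le> p x * W x y * r" using True by (intro mult_left_mono) auto
    also have "\<dots> = (p x * W x y / out y) * W x y" using True by (simp add: r_def)
    also have "\<dots> \<le> 1 * W x y" using True pw by (intro mult_right_mono) auto
    finally have "p x * W x y * ln r \<le> W x y" by simp
    thus ?thesis using out_nn[of y] by linarith
  qed
  have lo: "- (W x y + out y) \<le> p x * W x y * ln r"
  proof -
    have "ln (1/r) \<le> 1/r - 1" using ln_le_minus_one r by simp
    hence "1 - 1/r \<le> ln r" using r by (simp add: ln_div)
    hence "p x * W x y * (1 - 1/r) \<le> p x * W x y * ln r"
      using True by (intro mult_left_mono) auto
    moreover have "p x * W x y * (1 - 1/r) = p x * W x y - p x * out y"
      using True by (simp add: r_def field_simps)
    moreover have "p x * out y \<le> out y" using le1 out_nn[of y] mult_right_mono[OF le1 out_nn[of y]] by simp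
    ultimately show ?thesis using True by (smt (verit) mult_nonneg_nonneg)
  qed
  have l2: "ln (2::real) \<ge> 1/2" using ln2_ge_two_thirds by simp
  have "\<bar>p x * W x y * ln r\<bar> \<le> W x y + out y" using up lo by simp
  hence "\<bar>p x * W x y * ln r\<bar> / ln 2 \<le> (W x y + out y) / (1/2)"
    using l2 by (intro frac_le) auto
  then show ?thesis by (simp add: id abs_divide)
qed

lemma bound_has_sum: "((\<lambda>(x,y). 2 * (W x y + out y)) has_sum (4 * card A)) (A \<times> B)"
proof -
  have inner: "((\<lambda>y. 2 * (W x y + out y)) has_sum 4) B" if "x \<in> A" for x
    using has_sum_cmult_right[OF has_sum_add[OF W_sum[OF that] out_sum], of 2] by simp
  have "((\<lambda>(x,y). 2 * (W x y + out y)) summable_on Sigma A (\<lambda>_. B))"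
    by (rule summable_on_SigmaI[where g="\<lambda>_. 4"]) (use inner finA W_nn out_nn in auto)
  then have "((\<lambda>(x,y). 2 * (W x y + out y)) has_sum (\<Sum>x\<in>A. 4)) (Sigma A (\<lambda>_. B))"
    by (intro has_sum_SigmaI[where g="\<lambda>_. 4"]) (use inner finA in auto)
  then show ?thesis by (simp add: mult.commute)
qed

lemma integrand_summable:
  "(\<lambda>(x,y). p x * W x y * info_dens W p A x y) summable_on (A \<times> B)"
proof -
  have "(\<lambda>z. norm ((\<lambda>(x,y). 2 * (W x y + out y)) z)) summable_on (A \<times> B)"
    using bound_has_sum summable_on_def summable_on_iff_abs_summable_on_real by blast
  hence "(\<lambda>z. norm ((\<lambda>(x,y). p x * W x y * info_dens W p A x y) z)) summable_on (A \<times> B)"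
    by (rule Infinite_Sum.abs_summable_on_comparison_test)
       (auto simp del: abs_mult simp add: order_trans[OF term_bound] out_nn W_nn)
  then show ?thesis using summable_on_iff_abs_summable_on_real by blast
qed

lemma mi_bound: "mutual_info W p A B \<le> 4 * card A"
proof -
  have "mutual_info W p A B \<le> infsum (\<lambda>(x,y). 2 * (W x y + out y)) (A \<times> B)"
    unfolding mutual_info_def
    by (rule infsum_mono[OF integrand_summable]) (use bound_has_sum summable_on_def term_bound in \<open>auto simp: abs_le_iff\<close>)
  also have "\<dots> = 4 * card A" using bound_has_sum infsumI by blast
  finally show ?thesis .
qed

end



lemma gibbs_fin:
  fixes q :: "'y \<Rightarrow> real"
  assumes fin: "finite F" and nn: "\<And>y. y \<in> F \<Longrightarrow> 0 \<le> q y" and Q: "Q = sum q F"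
  shows "(\<Sum>y\<in>F. q y * log 2 (Q / q y)) \<le> Q * log 2 (card F)"
proof (cases "Q > 0")
  case False
  then have "\<forall>y\<in>F. q y = 0" using Q nn fin sum_nonneg_eq_0_iff by (metis antisym_conv2 sum_nonneg)
  then show ?thesis using False Q by simp
next
  case True
  define N where "N = real (card F)"
  have Fne: "F \<noteq> {}" using True Q by auto
  have N: "N > 0" using Fne fin by (simp add: N_def card_gt_0_iff)
  have tb: "q y * ln (Q / q y) \<le> q y * ln N + (Q / N - q y)" if y: "y \<in> F" for y
  proof (cases "q y > 0")
    case False then have "q y = 0" using nn[OF y] by simp
    then show ?thesis using True N by simp
  next
    case qp: True
    have "ln (Q / (q y * N)) \<le> Q / (q y * N) - 1" using ln_le_minus_one True qp N by simp
    hence "q y * ln (Q / (q y * N)) \<le> q y * (Q / (q y * N) - 1)"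
      using qp by (intro mult_left_mono) auto
    moreover have "ln (Q / (q y * N)) = ln (Q / q y) - ln N"
      using True qp N by (simp add: ln_div ln_mult)
    moreover have "q y * (Q / (q y * N) - 1) = Q / N - q y" using qp N by (simp add: field_simps)
    ultimately have "q y * (ln (Q / q y) - ln N) \<le> Q / N - q y" by simp
    then show ?thesis by (simp add: algebra_simps)
  qed
  have "(\<Sum>y\<in>F. q y * ln (Q / q y)) \<le> (\<Sum>y\<in>F. q y * ln N + (Q / N - q y))"
    by (rule sum_mono) (rule tb)
  also have "\<dots> = Q * ln N + (N * (Q / N) - Q)"
    by (simp add: sum.distrib sum_subtractf sum_distrib_right[symmetric] Q N_def)
  also have "\<dots> = Q * ln N" using N by simp
  finally have "(\<Sum>y\<in>F. q y * ln (Q / q y)) \<le> Q * ln N" .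
  hence "(\<Sum>y\<in>F. q y * ln (Q / q y)) / ln 2 \<le> Q * ln N / ln 2"
    by (simp add: divide_right_mono)
  then show ?thesis
    by (simp add: log_def sum_divide_distrib N_def)
qed



locale fchan =
  fixes A :: "'a set" and U :: "'a \<Rightarrow> 'y \<Rightarrow> real" and Y :: "'y set" and f :: "'y \<Rightarrow> 'z" and K :: nat
  assumes finA: "finite A" and Ane: "A \<noteq> {}" and chU: "is_channel U A Y"
    and fibfin: "\<And>z. finite {y\<in>Y. f y = z}" and fibK: "\<And>z. card {y\<in>Y. f y = z} \<le> K"
begin

definition F :: "'z \<Rightarrow> 'y set" where "F z = {y\<in>Y. f y = z}"
definition V :: "'a \<Rightarrow> 'z \<Rightarrow> real" where "V = image_channel f Y U"
abbreviation "Z \<equiv> f ` Y"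

lemma finF: "finite (F z)" using fibfin by (simp add: F_def)
lemma cardF: "card (F z) \<le> K" using fibK by (simp add: F_def)
lemma F_mem: "y \<in> F z \<longleftrightarrow> y \<in> Y \<and> f y = z" by (simp add: F_def)

lemma V_eq: "V x z = sum (U x) (F z)"
  using finF by (simp add: V_def image_channel_def F_def)

lemma U_nn: "x \<in> A \<Longrightarrow> 0 \<le> U x y"
  using chU by (simp add: is_channel_def)
lemma U_out: "x \<in> A \<Longrightarrow> y \<notin> Y \<Longrightarrow> U x y = 0"
  using chU by (simp add: is_channel_def)
lemma U_sum: "x \<in> A \<Longrightarrow> (U x has_sum 1) Y"
  using chU by (simp add: is_channel_def)
lemma countY: "countable Y"
  using chU by (simp add: is_channel_def)

lemma V_nn: "x \<in> A \<Longrightarrow> 0 \<le> V x z"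
  by (simp add: V_eq sum_nonneg U_nn)

lemma V_sub:
  assumes x: "x \<in> A" and S: "S \<subseteq> Z"
  shows "(V x has_sum infsum (U x) {y\<in>Y. f y \<in> S}) S"
proof -
  have "U x summable_on {y\<in>Y. f y \<in> S}"
    by (rule summable_on_subset_banach[of _ Y]) (use U_sum[OF x] summable_on_def in auto)
  hence hs: "(U x has_sum infsum (U x) {y\<in>Y. f y \<in> S}) {y\<in>Y. f y \<in> S}" by simp
  have fin: "finite {y \<in> {y\<in>Y. f y \<in> S}. f y = z}" for z
    by (rule finite_subset[OF _ finF[of z]]) (auto simp: F_def)
  have img: "f ` {y\<in>Y. f y \<in> S} = S" using S by auto
  have "((\<lambda>z. sum (U x) {y \<in> {y\<in>Y. f y \<in> S}. f y = z}) has_sum infsum (U x) {y\<in>Y. f y \<in> S}) S"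
    using has_sum_regroup[OF hs fin] img by simp
  moreover have "sum (U x) {y \<in> {y\<in>Y. f y \<in> S}. f y = z} = V x z" if "z \<in> S" for z
  proof -
    have "{y \<in> {y\<in>Y. f y \<in> S}. f y = z} = F z" using that by (auto simp: F_def)
    then show ?thesis by (simp add: V_eq)
  qed
  ultimately show ?thesis using has_sum_cong[of S "\<lambda>z. sum (U x) {y \<in> {y\<in>Y. f y \<in> S}. f y = z}" "V x"] by simp
qed

lemma chV: "is_channel V A Z"
  unfolding is_channel_def
proof (intro conjI ballI allI impI)
  show "countable Z" using countY by simp
next
  fix x y assume "x \<in> A" then show "0 \<le> V x y" by (rule V_nn)
next
  fix x z assume "x \<in> A" "z \<notin> Z"
  then have "F z = {}" by (auto simp: F_def)
  then show "V x z = 0" by (simp add: V_eq)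
next
  fix x assume x: "x \<in> A"
  have "{y\<in>Y. f y \<in> Z} = Y" by auto
  then show "(V x has_sum 1) Z" using V_sub[OF x order_refl] U_sum[OF x] infsumI by fastforce
qed

lemma regroupAY:
  fixes g :: "'a \<times> 'y \<Rightarrow> real"
  assumes "(g has_sum s) (A \<times> Y)"
  shows "((\<lambda>z. \<Sum>x\<in>A. \<Sum>y\<in>F z. g (x, y)) has_sum s) Z"
proof -
  have fibe: "{q \<in> A \<times> Y. (f \<circ> snd) q = z} = A \<times> F z" for z by (auto simp: F_def)
  have fin: "finite {q \<in> A \<times> Y. (f \<circ> snd) q = z}" for z
    unfolding fibe using finA finF by simp
  have img: "(f \<circ> snd) ` (A \<times> Y) = Z" using Ane by (auto simp: image_iff)
  have "((\<lambda>z. sum g {q \<in> A \<times> Y. (f \<circ> snd) q = z}) has_sum s) ((f \<circ> snd) ` (A \<times> Y))"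
    by (rule has_sum_regroup[OF assms fin])
  then show ?thesis unfolding fibe img by (simp add: sum.cartesian_product')
qed

lemma regroupAZ:
  fixes g :: "'a \<times> 'z \<Rightarrow> real"
  assumes "(g has_sum s) (A \<times> Z)"
  shows "((\<lambda>z. \<Sum>x\<in>A. g (x, z)) has_sum s) Z"
proof -
  have fin: "finite {q \<in> A \<times> Z. snd q = z}" for z
    by (rule finite_subset[of _ "A \<times> {z}"]) (use finA in auto)
  have img: "snd ` (A \<times> Z) = Z" using Ane by (auto simp: image_iff)
  have "((\<lambda>z. sum g {q \<in> A \<times> Z. snd q = z}) has_sum s) (snd ` (A \<times> Z))"
    by (rule has_sum_regroup[OF assms fin])
  moreover have "sum g {q \<in> A \<times> Z. snd q = z} = (\<Sum>x\<in>A. g (x, z))" if "z \<in> Z" for z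
  proof -
    have "{q \<in> A \<times> Z. snd q = z} = (\<lambda>x. (x, z)) ` A" using that by auto
    then show ?thesis by (simp add: sum.reindex inj_on_def)
  qed
  ultimately show ?thesis unfolding img
    using has_sum_cong[of Z "\<lambda>z. sum g {q \<in> A \<times> Z. snd q = z}" "\<lambda>z. \<Sum>x\<in>A. g (x, z)"] by simp
qed

end



context fchan
begin

lemma U_summable: "x \<in> A \<Longrightarrow> S \<subseteq> Y \<Longrightarrow> U x summable_on S"
proof -
  assume a: "x \<in> A" "S \<subseteq> Y"
  have "U x summable_on Y" using U_sum[OF a(1)] by (auto simp: summable_on_def)
  then show ?thesis using a(2) by (rule summable_on_subset_banach)
qed

lemma U_le_V: "x \<in> A \<Longrightarrow> y \<in> Y \<Longrightarrow> U x y \<le> V x (f y)"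
  unfolding V_eq by (rule member_le_sum) (auto simp: F_def U_nn fibfin)

lemma F_ne: "z \<in> Z \<Longrightarrow> card (F z) \<ge> 1"
  using finF[of z] by (auto simp: F_def Suc_le_eq card_gt_0_iff)

lemma K_pos: "Y \<noteq> {} \<Longrightarrow> K \<ge> 1"
  using F_ne cardF by (metis equals0I image_eqI le_trans)

context
  fixes p :: "'a \<Rightarrow> real"
  assumes pd: "is_dist p A"
begin

interpretation CU: chanp U A Y p using finA chU pd by unfold_locales
interpretation CV: chanp V A Z p using finA chV pd by unfold_locales

abbreviation "pU \<equiv> out_dist U p A"
abbreviation "pV \<equiv> out_dist V p A"

lemma pV_eq: "pV z = sum pU (F z)"
proof -
  have "pV z = (\<Sum>x\<in>A. \<Sum>y\<in>F z. p x * U x y)"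
    by (simp add: out_dist_def V_eq sum_distrib_left)
  also have "\<dots> = (\<Sum>y\<in>F z. \<Sum>x\<in>A. p x * U x y)" by (rule sum.swap)
  finally show ?thesis by (simp add: out_dist_def)
qed

lemma pt_facts:
  assumes x: "x \<in> A" and y: "y \<in> F z" and a: "p x * U x y > 0"
  shows "p x > 0" "U x y > 0" "pU y > 0" "V x z > 0" "pV z > 0"
    "info_dens U p A x y = log 2 (U x y / pU y)" "info_dens V p A x z = log 2 (V x z / pV z)"
proof -
  have px: "p x \<ge> 0" using CU.p_nn[OF x] .
  have u: "U x y \<ge> 0" using U_nn[OF x] .
  show p: "p x > 0" using a px u by (metis less_eq_real_def mult_zero_left)
  show U: "U x y > 0" using a px u by (metis less_eq_real_def mult_zero_right)
  show pU: "pU y > 0" using CU.pW_le_out[OF x, of y] a by linarith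
  have fy: "f y = z" "y \<in> Y" using y by (auto simp: F_def)
  show V: "V x z > 0" using U_le_V[OF x fy(2)] fy U by simp
  show pV: "pV z > 0" using CV.pW_le_out[OF x, of z] p V by (smt (verit) mult_pos_pos)
  show "info_dens U p A x y = log 2 (U x y / pU y)" using U pU by (simp add: info_dens_def)
  show "info_dens V p A x z = log 2 (V x z / pV z)" using V pV by (simp add: info_dens_def)
qed

lemma pt_upper:
  assumes x: "x \<in> A" and y: "y \<in> F z"
  shows "p x * U x y * (info_dens U p A x y - info_dens V p A x z) \<le> p x * U x y * log 2 (pV z / pU y)"
proof (cases "p x * U x y > 0")
  case False
  then have e0: "p x * U x y = 0" using CU.p_nn[OF x] U_nn[OF x, of y] using mult_nonneg_nonneg[of "p x" "U x y"] by linarith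
  show ?thesis unfolding e0 by simp
next
  case True
  note P = pt_facts[OF x y True]
  have fy: "f y = z" "y \<in> Y" using y by (auto simp: F_def)
  have "U x y \<le> V x z" using U_le_V[OF x fy(2)] fy by simp
  hence "log 2 (U x y) \<le> log 2 (V x z)" using P by simp
  hence "info_dens U p A x y - info_dens V p A x z \<le> log 2 (pV z / pU y)"
    using P by (simp add: log_divide)
  then show ?thesis using True by (intro mult_left_mono) auto
qed

lemma pt_lower:
  assumes x: "x \<in> A" and y: "y \<in> F z"
  shows "p x * U x y - p x * V x z * pU y / pV z \<le> p x * U x y * (info_dens U p A x y - info_dens V p A x z) * ln 2"
proof (cases "p x * U x y > 0")
  case False
  then have e0: "p x * U x y = 0" using CU.p_nn[OF x] U_nn[OF x, of y] using mult_nonneg_nonneg[of "p x" "U x y"] by linarith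
  moreover have "0 \<le> p x * V x z * pU y / pV z"
    using CU.p_nn[OF x] V_nn[OF x] CU.out_nn CV.out_nn by simp
  ultimately show ?thesis unfolding e0 by simp
next
  case True
  note P = pt_facts[OF x y True]
  define r where "r = V x z * pU y / (U x y * pV z)"
  have r: "r > 0" using P by (simp add: r_def)
  have "(info_dens U p A x y - info_dens V p A x z) * ln 2 = - ln r"
    using P by (simp add: r_def log_def ln_div ln_mult field_simps)
  moreover have "ln r \<le> r - 1" using ln_le_minus_one[OF r] .
  ultimately have "1 - r \<le> (info_dens U p A x y - info_dens V p A x z) * ln 2" by simp
  hence "p x * U x y * (1 - r) \<le> p x * U x y * ((info_dens U p A x y - info_dens V p A x z) * ln 2)"
    using True by (intro mult_left_mono) auto
  moreover have "p x * U x y * (1 - r) = p x * U x y - p x * V x z * pU y / pV z"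
    using P by (simp add: r_def field_simps)
  ultimately show ?thesis by (simp add: mult.assoc)
qed

definition dU :: "'z \<Rightarrow> real" where
  "dU z = (\<Sum>x\<in>A. \<Sum>y\<in>F z. p x * U x y * info_dens U p A x y)"
definition dV :: "'z \<Rightarrow> real" where
  "dV z = (\<Sum>x\<in>A. p x * V x z * info_dens V p A x z)"

lemma d_split: "dU z - dV z = (\<Sum>x\<in>A. \<Sum>y\<in>F z. p x * U x y * (info_dens U p A x y - info_dens V p A x z))"
proof -
  have "dV z = (\<Sum>x\<in>A. \<Sum>y\<in>F z. p x * U x y * info_dens V p A x z)"
    by (simp add: dV_def V_eq sum_distrib_left sum_distrib_right)
  then show ?thesis
    by (simp add: dU_def right_diff_distrib sum_subtractf)
qed

lemma perz_upper:
  assumes z: "z \<in> Z"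
  shows "dU z - dV z \<le> pV z * log 2 K"
proof -
  have "dU z - dV z \<le> (\<Sum>x\<in>A. \<Sum>y\<in>F z. p x * U x y * log 2 (pV z / pU y))"
    unfolding d_split by (intro sum_mono pt_upper) auto
  also have "\<dots> = (\<Sum>y\<in>F z. \<Sum>x\<in>A. p x * U x y * log 2 (pV z / pU y))" by (rule sum.swap)
  also have "\<dots> = (\<Sum>y\<in>F z. pU y * log 2 (pV z / pU y))"
    by (simp add: out_dist_def sum_distrib_right)
  also have "\<dots> \<le> pV z * log 2 (card (F z))"
    by (rule gibbs_fin[OF finF]) (simp_all add: CU.out_nn pV_eq)
  also have "\<dots> \<le> pV z * log 2 K"
    using F_ne[OF z] cardF[of z] CV.out_nn[of z] by (intro mult_left_mono) auto
  finally show ?thesis .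
qed

lemma perz_lower:
  shows "0 \<le> dU z - dV z"
proof -
  have "(\<Sum>x\<in>A. \<Sum>y\<in>F z. p x * U x y - p x * V x z * pU y / pV z)
        \<le> (\<Sum>x\<in>A. \<Sum>y\<in>F z. p x * U x y * (info_dens U p A x y - info_dens V p A x z) * ln 2)"
    by (intro sum_mono pt_lower) auto
  also have "\<dots> = (dU z - dV z) * ln 2"
    by (simp add: d_split sum_distrib_right)
  finally have le: "(\<Sum>x\<in>A. \<Sum>y\<in>F z. p x * U x y - p x * V x z * pU y / pV z) \<le> (dU z - dV z) * ln 2" .
  have s1: "(\<Sum>x\<in>A. \<Sum>y\<in>F z. p x * U x y) = pV z"
    by (simp add: out_dist_def V_eq sum_distrib_left)
  have s2: "(\<Sum>x\<in>A. \<Sum>y\<in>F z. p x * V x z * pU y / pV z) = pV z * pV z / pV z"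
  proof -
    have "(\<Sum>x\<in>A. \<Sum>y\<in>F z. p x * V x z * pU y / pV z) = (\<Sum>x\<in>A. p x * V x z * sum pU (F z) / pV z)"
      by (simp add: sum_distrib_left sum_divide_distrib)
    also have "\<dots> = (\<Sum>x\<in>A. p x * V x z) * sum pU (F z) / pV z"
      by (simp add: sum_distrib_right sum_divide_distrib)
    also have "\<dots> = pV z * pV z / pV z" by (simp only: pV_eq[symmetric]) (simp add: out_dist_def)
    finally show ?thesis .
  qed
  have "0 \<le> pV z - pV z * pV z / pV z" by (cases "pV z = 0") auto
  also have "\<dots> = (\<Sum>x\<in>A. \<Sum>y\<in>F z. p x * U x y - p x * V x z * pU y / pV z)"
    by (simp add: sum_subtractf s1 s2)
  finally have "0 \<le> (dU z - dV z) * ln 2" using le by linarith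
  then show ?thesis by (simp add: zero_le_mult_iff)
qed

lemma mi_diff:
  shows "0 \<le> mutual_info U p A Y - mutual_info V p A Z"
    and "mutual_info U p A Y - mutual_info V p A Z \<le> log 2 K"
proof -
  have hU: "(dU has_sum mutual_info U p A Y) Z"
    using regroupAY[OF CU.integrand_summable[unfolded summable_iff_has_sum_infsum]]
    unfolding dU_def[abs_def] mutual_info_def by simp
  have hV: "(dV has_sum mutual_info V p A Z) Z"
    using regroupAZ[OF CV.integrand_summable[unfolded summable_iff_has_sum_infsum]]
    unfolding dV_def[abs_def] mutual_info_def by simp
  have hD: "((\<lambda>z. dU z - dV z) has_sum (mutual_info U p A Y - mutual_info V p A Z)) Z"
    by (rule has_sum_diff_real[OF hU hV])
  show "0 \<le> mutual_info U p A Y - mutual_info V p A Z"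
    by (rule has_sum_nonneg[OF hD]) (rule perz_lower)
  have "((\<lambda>z. pV z * log 2 K) has_sum (1 * log 2 K)) Z"
    by (rule has_sum_cmult_left[OF CV.out_sum])
  then show "mutual_info U p A Y - mutual_info V p A Z \<le> log 2 K"
    using has_sum_mono[OF hD _ perz_upper] by simp
qed

end

end



context chanp
begin

lemma joint_has_sum: "((\<lambda>(x,y). p x * W x y) has_sum 1) (A \<times> B)"
proof -
  have inner: "((\<lambda>y. p x * W x y) has_sum p x) B" if "x \<in> A" for x
    using has_sum_cmult_right[OF W_sum[OF that], of "p x"] by simp
  have "(\<lambda>(x,y). p x * W x y) summable_on Sigma A (\<lambda>_. B)"
    by (rule summable_on_SigmaI[where g=p]) (use inner finA W_nn p_nn in auto)
  then have "((\<lambda>(x,y). p x * W x y) has_sum (sum p A)) (Sigma A (\<lambda>_. B))"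
    by (intro has_sum_SigmaI[where g=p]) (use inner finA in auto)
  then show ?thesis by (simp add: p_sum)
qed

lemma ind_summable:
  "(\<lambda>(x,y). if Q x y then p x * W x y else 0) summable_on (A \<times> B)"
  by (rule summable_on_comparison_test[OF joint_has_sum[THEN has_sum_imp_summable]])
     (auto simp: p_nn W_nn)

end


context fchan
begin

context
  fixes p :: "'a \<Rightarrow> real"
  assumes pd: "is_dist p A"
begin

interpretation CU: chanp U A Y p using finA chU pd by unfold_locales
interpretation CV: chanp V A Z p using finA chV pd by unfold_locales

lemma transfer:
  "infsum (\<lambda>(x,y). if P x (f y) then p x * U x y else 0) (A \<times> Y)
   = infsum (\<lambda>(x,z). if P x z then p x * V x z else 0) (A \<times> Z)"
proof -
  have h1: "((\<lambda>z. \<Sum>x\<in>A. \<Sum>y\<in>F z. (\<lambda>(x,y). if P x (f y) then p x * U x y else 0) (x, y))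
     has_sum infsum (\<lambda>(x,y). if P x (f y) then p x * U x y else 0) (A \<times> Y)) Z"
    by (rule regroupAY) (use CU.ind_summable[of "\<lambda>x y. P x (f y)"] in simp)
  have h2: "((\<lambda>z. \<Sum>x\<in>A. (\<lambda>(x,z). if P x z then p x * V x z else 0) (x, z))
     has_sum infsum (\<lambda>(x,z). if P x z then p x * V x z else 0) (A \<times> Z)) Z"
    by (rule regroupAZ) (use CV.ind_summable[of P] in simp)
  have eq: "(\<Sum>x\<in>A. \<Sum>y\<in>F z. (\<lambda>(x,y). if P x (f y) then p x * U x y else 0) (x, y))
          = (\<Sum>x\<in>A. (\<lambda>(x,z). if P x z then p x * V x z else 0) (x, z))" for z
  proof -
    have "(\<Sum>y\<in>F z. (if P x (f y) then p x * U x y else 0)) = (if P x z then p x * V x z else 0)" for x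
    proof -
      have "(\<Sum>y\<in>F z. (if P x (f y) then p x * U x y else 0)) = (\<Sum>y\<in>F z. (if P x z then p x * U x y else 0))"
        by (rule sum.cong) (auto simp: F_def)
      then show ?thesis by (simp add: V_eq sum_distrib_left)
    qed
    then show ?thesis by simp
  qed
  show ?thesis using has_sum_unique[OF h1 h2[folded eq]] .
qed

lemma pU_le_pV: "y \<in> F z \<Longrightarrow> pU p y \<le> pV p z"
  unfolding pV_eq[OF pd] by (rule member_le_sum) (auto simp: finF CU.out_nn)

lemma diff_pt1:
  assumes x: "x \<in> A" and y: "y \<in> F z" and a: "p x * U x y > 0"
    and d: "info_dens U p A x y - info_dens V p A x z > t"
  shows "pU p y < pV p z * 2 powr (- t)"
proof -
  note P = pt_facts[OF pd x y a]
  have fy: "f y = z" "y \<in> Y" using y by (auto simp: F_def)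
  have "U x y \<le> V x z" using U_le_V[OF x fy(2)] fy by simp
  hence l1: "log 2 (U x y) \<le> log 2 (V x z)" using P by simp
  have dd: "info_dens U p A x y - info_dens V p A x z = (log 2 (U x y) - log 2 (V x z)) + (log 2 (pV p z) - log 2 (pU p y))"
    using P by (simp add: log_divide)
  have "log 2 (pU p y) < log 2 (pV p z) - t" using d l1 dd by linarith
  hence "2 powr log 2 (pU p y) < 2 powr (log 2 (pV p z) - t)" by simp
  then show ?thesis using P by (simp add: powr_diff powr_minus divide_inverse)
qed

lemma diff_pt2:
  assumes x: "x \<in> A" and y: "y \<in> F z" and a: "p x * U x y > 0"
    and d: "info_dens U p A x y - info_dens V p A x z < - t"
  shows "U x y < V x z * 2 powr (- t)"
proof -
  note P = pt_facts[OF pd x y a]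
  have "pU p y \<le> pV p z" using pU_le_pV[OF y] .
  hence l1: "log 2 (pU p y) \<le> log 2 (pV p z)" using P by simp
  have dd: "info_dens U p A x y - info_dens V p A x z = (log 2 (U x y) - log 2 (V x z)) + (log 2 (pV p z) - log 2 (pU p y))"
    using P by (simp add: log_divide)
  have "log 2 (U x y) < log 2 (V x z) - t" using d l1 dd by linarith
  hence "2 powr log 2 (U x y) < 2 powr (log 2 (V x z) - t)" by simp
  then show ?thesis using P by (simp add: powr_diff powr_minus divide_inverse)
qed


lemma perz_diff:
  "(\<Sum>x\<in>A. \<Sum>y\<in>F z. if \<bar>info_dens U p A x y - info_dens V p A x z\<bar> > t then p x * U x y else 0)
    \<le> 2 * K * 2 powr (- t) * pV p z"
proof -
  define c where "c = pV p z * 2 powr (- t)"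
  have c0: "c \<ge> 0" using CV.out_nn by (simp add: c_def)
  have pt: "(if \<bar>info_dens U p A x y - info_dens V p A x z\<bar> > t then p x * U x y else 0)
     \<le> (if pU p y < c then p x * U x y else 0) + p x * (if U x y < V x z * 2 powr (- t) then U x y else 0)"
    if x: "x \<in> A" and y: "y \<in> F z" for x y
  proof -
    have px: "p x \<ge> 0" "U x y \<ge> 0" using CU.p_nn[OF x] U_nn[OF x] by auto
    show ?thesis
    proof (cases "p x * U x y > 0")
      case False
      then have e0: "p x * U x y = 0" using px mult_nonneg_nonneg[of "p x" "U x y"] by linarith
      show ?thesis unfolding e0 using px by simp
    next
      case True
      show ?thesis
      proof (cases "\<bar>info_dens U p A x y - info_dens V p A x z\<bar> > t")
        case False then show ?thesis using px True by simp
      next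
        case c: True
        then consider "info_dens U p A x y - info_dens V p A x z > t" | "info_dens U p A x y - info_dens V p A x z < - t"
          by linarith
        then show ?thesis
        proof cases
          case 1
          with diff_pt1[OF x y True] have "pU p y < c" by (simp add: c_def)
          then show ?thesis using c px by simp
        next
          case 2
          with diff_pt2[OF x y True] have "U x y < V x z * 2 powr (- t)" by simp
          then show ?thesis using c px True by simp
        qed
      qed
    qed
  qed
  have "(\<Sum>x\<in>A. \<Sum>y\<in>F z. if \<bar>info_dens U p A x y - info_dens V p A x z\<bar> > t then p x * U x y else 0)
     \<le> (\<Sum>x\<in>A. \<Sum>y\<in>F z. (if pU p y < c then p x * U x y else 0) + p x * (if U x y < V x z * 2 powr (- t) then U x y else 0))"
    by (intro sum_mono pt) auto
  also have "\<dots> = (\<Sum>y\<in>F z. \<Sum>x\<in>A. (if pU p y < c then p x * U x y else 0))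
       + (\<Sum>x\<in>A. p x * (\<Sum>y\<in>F z. (if U x y < V x z * 2 powr (- t) then U x y else 0)))"
    by (simp add: sum.distrib sum_distrib_left sum.swap[of _ A "F z"])
  also have "(\<Sum>y\<in>F z. \<Sum>x\<in>A. (if pU p y < c then p x * U x y else 0)) = (\<Sum>y\<in>F z. if pU p y < c then pU p y else 0)"
    by (rule sum.cong) (auto simp: out_dist_def)
  also have "\<dots> \<le> (\<Sum>y\<in>F z. c)" by (rule sum_mono) (use c0 in auto)
  also have "\<dots> \<le> K * c" using cardF[of z] c0 by (simp add: mult_right_mono)
  also have "(\<Sum>x\<in>A. p x * (\<Sum>y\<in>F z. (if U x y < V x z * 2 powr (- t) then U x y else 0)))
      \<le> (\<Sum>x\<in>A. p x * (K * (V x z * 2 powr (- t))))"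
  proof (rule sum_mono, rule mult_left_mono)
    fix x assume x: "x \<in> A"
    show "p x \<ge> 0" using CU.p_nn[OF x] .
    have "(\<Sum>y\<in>F z. (if U x y < V x z * 2 powr (- t) then U x y else 0)) \<le> (\<Sum>y\<in>F z. V x z * 2 powr (- t))"
      by (rule sum_mono) (use V_nn[OF x] in auto)
    also have "\<dots> \<le> K * (V x z * 2 powr (- t))" using cardF[of z] V_nn[OF x, of z] by (simp add: mult_right_mono)
    finally show "(\<Sum>y\<in>F z. (if U x y < V x z * 2 powr (- t) then U x y else 0)) \<le> K * (V x z * 2 powr (- t))" .
  qed
  also have "(\<Sum>x\<in>A. p x * (K * (V x z * 2 powr (- t)))) = K * c"
    by (simp add: c_def out_dist_def sum_distrib_left sum_distrib_right mult_ac)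
  finally show ?thesis by (simp add: c_def)
qed

lemma diff_bound:
  "infsum (\<lambda>(x,y). if \<bar>info_dens U p A x y - info_dens V p A x (f y)\<bar> > t then p x * U x y else 0) (A \<times> Y)
    \<le> 2 * K * 2 powr (- t)"
proof -
  have h1: "((\<lambda>z. \<Sum>x\<in>A. \<Sum>y\<in>F z. (\<lambda>(x,y). if \<bar>info_dens U p A x y - info_dens V p A x (f y)\<bar> > t then p x * U x y else 0) (x, y))
     has_sum infsum (\<lambda>(x,y). if \<bar>info_dens U p A x y - info_dens V p A x (f y)\<bar> > t then p x * U x y else 0) (A \<times> Y)) Z"
    by (rule regroupAY) (use CU.ind_summable[of "\<lambda>x y. \<bar>info_dens U p A x y - info_dens V p A x (f y)\<bar> > t"] in simp)
  have eq: "(\<Sum>x\<in>A. \<Sum>y\<in>F z. (\<lambda>(x,y). if \<bar>info_dens U p A x y - info_dens V p A x (f y)\<bar> > t then p x * U x y else 0) (x, y))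
     = (\<Sum>x\<in>A. \<Sum>y\<in>F z. if \<bar>info_dens U p A x y - info_dens V p A x z\<bar> > t then p x * U x y else 0)" for z
    by (intro sum.cong refl) (auto simp: F_def)
  have h2: "((\<lambda>z. 2 * K * 2 powr (- t) * pV p z) has_sum (2 * K * 2 powr (- t) * 1)) Z"
    by (rule has_sum_cmult_right[OF CV.out_sum])
  show ?thesis using has_sum_mono[OF h1 h2] eq perz_diff by simp
qed

end

end



lemma real_split:
  fixes N a b I \<delta> :: real
  assumes N: "N > 0" and h: "\<bar>a / N - I\<bar> > \<delta>"
  shows "\<bar>b / N - I\<bar> > \<delta> / 2 \<or> \<bar>a - b\<bar> > N * (\<delta> / 2)"
proof (rule ccontr)
  assume "\<not> ?thesis"
  hence h1: "\<bar>b / N - I\<bar> \<le> \<delta> / 2" and h2: "\<bar>a - b\<bar> \<le> N * (\<delta> / 2)" by auto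
  have "\<bar>a / N - b / N\<bar> = \<bar>a - b\<bar> / N" using N by (simp add: diff_divide_distrib[symmetric])
  also have "\<dots> \<le> \<delta> / 2" using h2 N by (simp add: divide_le_eq mult.commute)
  finally show False using h h1 by linarith
qed

context fchan
begin

context
  fixes p :: "'a \<Rightarrow> real"
  assumes pd: "is_dist p A"
begin

interpretation CU: chanp U A Y p using finA chU pd by unfold_locales
interpretation CV: chanp V A Z p using finA chV pd by unfold_locales

lemma sub_to_ind:
  "infsum (\<lambda>(x,y). W x y) {(x,y)\<in>S \<times> T. Q x y} = infsum (\<lambda>(x,y). if Q x y then W x y else 0) (S \<times> T)"
  by (rule infsum_cong_neutral) (auto split: if_splits)

lemma stab1:
  assumes N: "N > 0"
  shows "infsum (\<lambda>(x,y). p x * U x y) {(x,y)\<in>A \<times> Y. \<bar>info_dens U p A x y / N - I\<bar> > \<delta>}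
    \<le> infsum (\<lambda>(x,y). p x * V x y) {(x,y)\<in>A \<times> Z. \<bar>info_dens V p A x y / N - I\<bar> > \<delta> / 2}
      + 2 * K * 2 powr (- (N * (\<delta> / 2)))"
proof -
  let ?t = "N * (\<delta> / 2)"
  let ?g1 = "\<lambda>(x,y). if \<bar>info_dens V p A x (f y) / N - I\<bar> > \<delta> / 2 then p x * U x y else 0"
  let ?g2 = "\<lambda>(x,y). if \<bar>info_dens U p A x y - info_dens V p A x (f y)\<bar> > ?t then p x * U x y else 0"
  have s1: "?g1 summable_on (A \<times> Y)" using CU.ind_summable[of "\<lambda>x y. \<bar>info_dens V p A x (f y) / N - I\<bar> > \<delta> / 2"] by simp
  have s2: "?g2 summable_on (A \<times> Y)" using CU.ind_summable[of "\<lambda>x y. \<bar>info_dens U p A x y - info_dens V p A x (f y)\<bar> > ?t"] by simp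
  have "infsum (\<lambda>(x,y). p x * U x y) {(x,y)\<in>A \<times> Y. \<bar>info_dens U p A x y / N - I\<bar> > \<delta>}
      = infsum (\<lambda>(x,y). if \<bar>info_dens U p A x y / N - I\<bar> > \<delta> then p x * U x y else 0) (A \<times> Y)"
    by (rule sub_to_ind)
  also have "\<dots> \<le> infsum (\<lambda>q. ?g1 q + ?g2 q) (A \<times> Y)"
  proof (rule infsum_mono)
    show "(\<lambda>(x,y). if \<bar>info_dens U p A x y / N - I\<bar> > \<delta> then p x * U x y else 0) summable_on (A \<times> Y)"
      using CU.ind_summable by simp
    show "(\<lambda>q. ?g1 q + ?g2 q) summable_on (A \<times> Y)" by (rule summable_on_add[OF s1 s2])
    fix q assume q: "q \<in> A \<times> Y"
    obtain x y where qq: "q = (x, y)" "x \<in> A" by (metis q mem_Times_iff prod.collapse)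
    have nn: "0 \<le> p x * U x y" using CU.p_nn[OF qq(2)] U_nn[OF qq(2)] by simp
    show "(\<lambda>(x,y). if \<bar>info_dens U p A x y / N - I\<bar> > \<delta> then p x * U x y else 0) q \<le> ?g1 q + ?g2 q"
      using real_split[where a="info_dens U p A x y" and b="info_dens V p A x (f y)" and I=I and \<delta>=\<delta>, OF N] nn qq(1) by auto
  qed
  also have "\<dots> = infsum ?g1 (A \<times> Y) + infsum ?g2 (A \<times> Y)" by (rule infsum_add[OF s1 s2])
  also have "infsum ?g1 (A \<times> Y) = infsum (\<lambda>(x,z). if \<bar>info_dens V p A x z / N - I\<bar> > \<delta> / 2 then p x * V x z else 0) (A \<times> Z)"
    using transfer[OF pd, of "\<lambda>x z. \<bar>info_dens V p A x z / N - I\<bar> > \<delta> / 2"] by simp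
  also have "\<dots> = infsum (\<lambda>(x,y). p x * V x y) {(x,y)\<in>A \<times> Z. \<bar>info_dens V p A x y / N - I\<bar> > \<delta> / 2}"
    by (rule sub_to_ind[symmetric])
  also have "infsum ?g2 (A \<times> Y) \<le> 2 * K * 2 powr (- ?t)" by (rule diff_bound[OF pd])
  finally show ?thesis by simp
qed

lemma stab2:
  assumes N: "N > 0"
  shows "infsum (\<lambda>(x,y). p x * V x y) {(x,y)\<in>A \<times> Z. \<bar>info_dens V p A x y / N - I\<bar> > \<delta>}
    \<le> infsum (\<lambda>(x,y). p x * U x y) {(x,y)\<in>A \<times> Y. \<bar>info_dens U p A x y / N - I\<bar> > \<delta> / 2}
      + 2 * K * 2 powr (- (N * (\<delta> / 2)))"
proof -
  let ?t = "N * (\<delta> / 2)"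
  let ?g1 = "\<lambda>(x,y). if \<bar>info_dens U p A x y / N - I\<bar> > \<delta> / 2 then p x * U x y else 0"
  let ?g2 = "\<lambda>(x,y). if \<bar>info_dens U p A x y - info_dens V p A x (f y)\<bar> > ?t then p x * U x y else 0"
  have s1: "?g1 summable_on (A \<times> Y)" using CU.ind_summable[of "\<lambda>x y. \<bar>info_dens U p A x y / N - I\<bar> > \<delta> / 2"] by simp
  have s2: "?g2 summable_on (A \<times> Y)" using CU.ind_summable[of "\<lambda>x y. \<bar>info_dens U p A x y - info_dens V p A x (f y)\<bar> > ?t"] by simp
  have "infsum (\<lambda>(x,y). p x * V x y) {(x,y)\<in>A \<times> Z. \<bar>info_dens V p A x y / N - I\<bar> > \<delta>}
      = infsum (\<lambda>(x,z). if \<bar>info_dens V p A x z / N - I\<bar> > \<delta> then p x * V x z else 0) (A \<times> Z)"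
    by (rule sub_to_ind)
  also have "\<dots> = infsum (\<lambda>(x,y). if \<bar>info_dens V p A x (f y) / N - I\<bar> > \<delta> then p x * U x y else 0) (A \<times> Y)"
    using transfer[OF pd, of "\<lambda>x z. \<bar>info_dens V p A x z / N - I\<bar> > \<delta>"] by simp
  also have "\<dots> \<le> infsum (\<lambda>q. ?g1 q + ?g2 q) (A \<times> Y)"
  proof (rule infsum_mono)
    show "(\<lambda>(x,y). if \<bar>info_dens V p A x (f y) / N - I\<bar> > \<delta> then p x * U x y else 0) summable_on (A \<times> Y)"
      using CU.ind_summable[of "\<lambda>x y. \<bar>info_dens V p A x (f y) / N - I\<bar> > \<delta>"] by simp
    show "(\<lambda>q. ?g1 q + ?g2 q) summable_on (A \<times> Y)" by (rule summable_on_add[OF s1 s2])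
    fix q assume q: "q \<in> A \<times> Y"
    obtain x y where qq: "q = (x, y)" "x \<in> A" by (metis q mem_Times_iff prod.collapse)
    have nn: "0 \<le> p x * U x y" using CU.p_nn[OF qq(2)] U_nn[OF qq(2)] by simp
    show "(\<lambda>(x,y). if \<bar>info_dens V p A x (f y) / N - I\<bar> > \<delta> then p x * U x y else 0) q \<le> ?g1 q + ?g2 q"
      using real_split[where a="info_dens V p A x (f y)" and b="info_dens U p A x y" and I=I and \<delta>=\<delta>, OF N] nn qq(1)
      by (auto simp: abs_minus_commute)
  qed
  also have "\<dots> = infsum ?g1 (A \<times> Y) + infsum ?g2 (A \<times> Y)" by (rule infsum_add[OF s1 s2])
  also have "infsum ?g1 (A \<times> Y) = infsum (\<lambda>(x,y). p x * U x y) {(x,y)\<in>A \<times> Y. \<bar>info_dens U p A x y / N - I\<bar> > \<delta> / 2}"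
    by (rule sub_to_ind[symmetric])
  also have "infsum ?g2 (A \<times> Y) \<le> 2 * K * 2 powr (- ?t)" by (rule diff_bound[OF pd])
  finally show ?thesis by simp
qed

end

end



lemma exists_good_color:
  fixes g :: "nat \<Rightarrow> real" and c :: "nat \<Rightarrow> nat" and T :: nat
  assumes I: "finite I" and T: "T \<ge> 1" and cT: "\<And>j. c j < T"
  shows "\<exists>t<T. (\<Sum>j\<in>I. if c j = t then g j else 0) * real T \<le> (\<Sum>j\<in>I. g j)"
proof (rule ccontr)
  assume "\<not> ?thesis"
  hence lt: "\<And>t. t < T \<Longrightarrow> (\<Sum>j\<in>I. g j) < (\<Sum>j\<in>I. if c j = t then g j else 0) * real T" by auto
  have "(\<Sum>t<T. (\<Sum>j\<in>I. g j)) < (\<Sum>t<T. (\<Sum>j\<in>I. if c j = t then g j else 0) * real T)"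
    by (rule sum_strict_mono) (use T lt in \<open>auto simp: lessThan_empty_iff\<close>)
  also have "\<dots> = (\<Sum>t<T. \<Sum>j\<in>I. if c j = t then g j else 0) * real T"
    by (simp add: sum_distrib_right)
  also have "(\<Sum>t<T. \<Sum>j\<in>I. if c j = t then g j else 0) = (\<Sum>j\<in>I. \<Sum>t<T. if c j = t then g j else 0)"
    by (rule sum.swap)
  also have "(\<Sum>j\<in>I. \<Sum>t<T. if c j = t then g j else 0) = (\<Sum>j\<in>I. g j)"
    by (rule sum.cong) (use cT in \<open>auto simp: sum.delta'\<close>)
  finally show False by simp
qed

lemma partition_exists:
  fixes u :: "nat \<Rightarrow> nat \<Rightarrow> real" and T :: nat
  assumes sym: "\<And>i j. u i j = u j i" and T: "T \<ge> 1"
  shows "finite I \<Longrightarrow> \<exists>c. (\<forall>i. c i < T) \<and>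
     (\<Sum>i\<in>I. \<Sum>j\<in>I-{i}. if c j = c i then u i j else 0) * real T \<le> (\<Sum>i\<in>I. \<Sum>j\<in>I-{i}. u i j)"
proof (induction I rule: finite_induct)
  case empty
  show ?case by (rule exI[of _ "\<lambda>_. 0"]) (use T in auto)
next
  case (insert a I)
  then obtain c where cT: "\<forall>i. c i < T"
    and c: "(\<Sum>i\<in>I. \<Sum>j\<in>I-{i}. if c j = c i then u i j else 0) * real T \<le> (\<Sum>i\<in>I. \<Sum>j\<in>I-{i}. u i j)" by auto
  obtain t where t: "t < T" and tb: "(\<Sum>j\<in>I. if c j = t then u a j else 0) * real T \<le> (\<Sum>j\<in>I. u a j)"
    using exists_good_color[OF insert(1) T, of c "u a"] cT by auto
  define c' where "c' = c(a := t)"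
  have c'T: "\<forall>i. c' i < T" using cT t by (simp add: c'_def)
  have aI: "a \<notin> I" by fact
  have ins: "insert a I - {i} = insert a (I - {i})" if "i \<in> I" for i using that aI by auto
  have ca: "(\<Sum>j\<in>insert a I - {a}. if c' j = c' a then u a j else 0) = (\<Sum>j\<in>I. if c j = t then u a j else 0)"
  proof -
    have "insert a I - {a} = I" using aI by auto
    moreover have "(\<Sum>j\<in>I. if c' j = c' a then u a j else 0) = (\<Sum>j\<in>I. if c j = t then u a j else 0)"
      by (rule sum.cong[OF refl]) (use aI in \<open>auto simp: c'_def\<close>)
    ultimately show ?thesis by simp
  qed
  have ci: "(\<Sum>j\<in>insert a I - {i}. if c' j = c' i then u i j else 0)
        = (\<Sum>j\<in>I - {i}. if c j = c i then u i j else 0) + (if t = c i then u i a else 0)" if i: "i \<in> I" for i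
  proof -
    have ia: "i \<noteq> a" using i aI by auto
    have "(\<Sum>j\<in>insert a I - {i}. if c' j = c' i then u i j else 0)
        = (if c' a = c' i then u i a else 0) + (\<Sum>j\<in>I - {i}. if c' j = c' i then u i j else 0)"
      unfolding ins[OF i] by (rule sum.insert) (use insert(1) aI in auto)
    also have "(\<Sum>j\<in>I - {i}. if c' j = c' i then u i j else 0) = (\<Sum>j\<in>I - {i}. if c j = c i then u i j else 0)"
      by (rule sum.cong) (use ia aI in \<open>auto simp: c'_def\<close>)
    finally show ?thesis using ia by (simp add: c'_def)
  qed
  have cu: "(\<Sum>j\<in>insert a I - {i}. u i j) = (\<Sum>j\<in>I - {i}. u i j) + u i a" if i: "i \<in> I" for i
    unfolding ins[OF i] by (subst sum.insert) (use insert(1) aI in auto)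
  have ua: "(\<Sum>j\<in>insert a I - {a}. u a j) = (\<Sum>j\<in>I. u a j)"
  proof -
    have "insert a I - {a} = I" using aI by auto
    then show ?thesis by simp
  qed
  have s1: "(\<Sum>i\<in>I. if t = c i then u i a else 0) = (\<Sum>j\<in>I. if c j = t then u a j else 0)"
    by (rule sum.cong) (auto simp: sym)
  have s2: "(\<Sum>i\<in>I. u i a) = (\<Sum>j\<in>I. u a j)" by (simp add: sym)
  have L: "(\<Sum>i\<in>insert a I. \<Sum>j\<in>insert a I-{i}. if c' j = c' i then u i j else 0)
     = (\<Sum>i\<in>I. \<Sum>j\<in>I-{i}. if c j = c i then u i j else 0) + 2 * (\<Sum>j\<in>I. if c j = t then u a j else 0)"
  proof -
    have "(\<Sum>i\<in>insert a I. \<Sum>j\<in>insert a I-{i}. if c' j = c' i then u i j else 0)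
       = (\<Sum>j\<in>insert a I-{a}. if c' j = c' a then u a j else 0) + (\<Sum>i\<in>I. \<Sum>j\<in>insert a I-{i}. if c' j = c' i then u i j else 0)"
      by (rule sum.insert) (use insert(1) aI in auto)
    also have "(\<Sum>i\<in>I. \<Sum>j\<in>insert a I-{i}. if c' j = c' i then u i j else 0)
       = (\<Sum>i\<in>I. (\<Sum>j\<in>I - {i}. if c j = c i then u i j else 0) + (if t = c i then u i a else 0))"
      by (rule sum.cong[OF refl]) (rule ci)
    finally show ?thesis by (simp only: ca sum.distrib s1)
  qed
  have R: "(\<Sum>i\<in>insert a I. \<Sum>j\<in>insert a I-{i}. u i j)
     = (\<Sum>i\<in>I. \<Sum>j\<in>I-{i}. u i j) + 2 * (\<Sum>j\<in>I. u a j)"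
    using insert(1) aI by (simp add: ua cu sum.distrib s2)
  show ?case
    by (rule exI[of _ c'], rule conjI[OF c'T]) (unfold L R, use c tb in \<open>simp add: distrib_right\<close>)
qed


lemma exists_big_color:
  fixes g :: "nat \<Rightarrow> real" and c :: "nat \<Rightarrow> nat" and T :: nat
  assumes I: "finite I" and T: "T \<ge> 1" and cT: "\<And>j. c j < T"
  shows "\<exists>t<T. (\<Sum>j\<in>I. g j) \<le> (\<Sum>j\<in>I. if c j = t then g j else 0) * real T"
proof (rule ccontr)
  assume "\<not> ?thesis"
  hence lt: "\<And>t. t < T \<Longrightarrow> (\<Sum>j\<in>I. if c j = t then g j else 0) * real T < (\<Sum>j\<in>I. g j)" by auto
  have "(\<Sum>t<T. (\<Sum>j\<in>I. if c j = t then g j else 0) * real T) < (\<Sum>t<T. (\<Sum>j\<in>I. g j))"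
    by (rule sum_strict_mono) (use T lt in \<open>auto simp: lessThan_empty_iff\<close>)
  moreover have "(\<Sum>t<T. (\<Sum>j\<in>I. if c j = t then g j else 0) * real T) = (\<Sum>t<T. \<Sum>j\<in>I. if c j = t then g j else 0) * real T"
    by (simp add: sum_distrib_right)
  moreover have "(\<Sum>t<T. \<Sum>j\<in>I. if c j = t then g j else 0) = (\<Sum>j\<in>I. \<Sum>t<T. if c j = t then g j else 0)"
    by (rule sum.swap)
  moreover have "(\<Sum>j\<in>I. \<Sum>t<T. if c j = t then g j else 0) = (\<Sum>j\<in>I. g j)"
    by (rule sum.cong) (use cT in \<open>auto simp: sum.delta'\<close>)
  ultimately show False by simp
qed

lemma select_subcode:
  fixes w :: "nat \<Rightarrow> nat \<Rightarrow> real" and M T :: nat and Kr :: real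
  assumes nn: "\<And>i j. 0 \<le> w i j" and row: "\<And>i. i < M \<Longrightarrow> (\<Sum>j<M. w i j) \<le> Kr"
    and T: "T \<ge> 1" and Kr: "Kr > 0"
  shows "\<exists>S \<subseteq> {..<M}. real M \<le> 2 * real T * real (card S) \<and>
           (\<forall>i\<in>S. (\<Sum>j\<in>S-{i}. w i j) * real T \<le> 4 * Kr)"
proof -
  define u where "u i j = w i j + w j i" for i j
  have usym: "u i j = u j i" for i j by (simp add: u_def)
  have unn: "0 \<le> u i j" for i j using nn by (simp add: u_def add_nonneg_nonneg)
  obtain c where cT: "\<forall>i. c i < T" and
    cb: "(\<Sum>i<M. \<Sum>j\<in>{..<M}-{i}. if c j = c i then u i j else 0) * real T \<le> (\<Sum>i<M. \<Sum>j\<in>{..<M}-{i}. u i j)"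
    using partition_exists[of u T "{..<M}", OF usym T] by auto
  define d where "d i = (\<Sum>j\<in>{..<M}-{i}. if c j = c i then u i j else 0)" for i
  have dnn: "0 \<le> d i" for i unfolding d_def by (intro sum_nonneg) (use unn in auto)
  have "(\<Sum>i<M. \<Sum>j\<in>{..<M}-{i}. u i j) \<le> (\<Sum>i<M. \<Sum>j<M. u i j)"
    by (intro sum_mono sum_mono2) (use unn in auto)
  also have "\<dots> = (\<Sum>i<M. \<Sum>j<M. w i j) + (\<Sum>i<M. \<Sum>j<M. w j i)"
    by (simp add: u_def sum.distrib)
  also have "(\<Sum>i<M. \<Sum>j<M. w j i) = (\<Sum>i<M. \<Sum>j<M. w i j)" by (rule sum.swap)
  also have "(\<Sum>i<M. \<Sum>j<M. w i j) \<le> (\<Sum>i<M. Kr)" by (intro sum_mono row) auto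
  finally have tot: "(\<Sum>i<M. d i) * real T \<le> 2 * real M * Kr"
    using cb unfolding d_def by (simp add: mult_ac)
  define G where "G = {i\<in>{..<M}. d i * real T \<le> 4 * Kr}"
  define B where "B = {..<M} - G"
  have "(\<Sum>i\<in>B. 4 * Kr) \<le> (\<Sum>i\<in>B. d i * real T)"
    by (rule sum_mono) (auto simp: B_def G_def)
  also have "\<dots> \<le> (\<Sum>i<M. d i * real T)"
    by (rule sum_mono2) (use dnn in \<open>auto simp: B_def\<close>)
  also have "\<dots> = (\<Sum>i<M. d i) * real T" by (simp add: sum_distrib_right)
  finally have X: "(\<Sum>i\<in>B. 4 * Kr) \<le> (\<Sum>i<M. d i) * real T" .
  have "(\<Sum>i\<in>B. 4 * Kr) = (2 * real (card B)) * (2 * Kr)" by simp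
  hence "(2 * real (card B)) * (2 * Kr) \<le> real M * (2 * Kr)" using X tot by (simp add: mult_ac)
  hence cB: "2 * real (card B) \<le> real M" using Kr mult_le_cancel_right_pos[of "2 * Kr"] by simp
  have GM: "G \<subseteq> {..<M}" by (auto simp: G_def)
  have cG: "card G + card B = M" unfolding B_def
    using card_Diff_subset[of G "{..<M}"] card_mono[of "{..<M}" G] GM finite_subset[OF GM] by simp
  have MG: "real M \<le> 2 * real (card G)" using cB cG by linarith
  have finG: "finite G" by (simp add: G_def)
  obtain t where t: "t < T" and tb: "(\<Sum>j\<in>G. (1::real)) \<le> (\<Sum>j\<in>G. if c j = t then 1 else 0) * real T"
    using exists_big_color[OF finG T, of c "\<lambda>_. 1"] cT by auto
  define S where "S = {i\<in>G. c i = t}"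
  have cS: "(\<Sum>j\<in>G. if c j = t then 1 else 0) = real (card S)"
    unfolding S_def using finG by (simp add: sum.If_cases Int_def conj_commute)
  have "real (card G) \<le> real (card S) * real T" using tb cS by simp
  hence "real M \<le> 2 * real T * real (card S)" using MG by (simp add: mult_ac)
  moreover have "S \<subseteq> {..<M}" by (auto simp: S_def G_def)
  moreover have "(\<Sum>j\<in>S-{i}. w i j) * real T \<le> 4 * Kr" if i: "i \<in> S" for i
  proof -
    have "(\<Sum>j\<in>S-{i}. w i j) \<le> (\<Sum>j\<in>S-{i}. if c j = c i then u i j else 0)"
      by (rule sum_mono) (use i nn in \<open>auto simp: S_def u_def\<close>)
    also have "\<dots> \<le> d i" unfolding d_def
      by (rule sum_mono2) (use unn in \<open>auto simp: S_def G_def\<close>)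
    finally have "(\<Sum>j\<in>S-{i}. w i j) * real T \<le> d i * real T" by (simp add: mult_right_mono)
    also have "\<dots> \<le> 4 * Kr" using i by (auto simp: S_def G_def)
    finally show ?thesis .
  qed
  ultimately show ?thesis by blast
qed



lemma coding_card:
  assumes "coding_scheme W A B M \<epsilon>" "finite A"
  shows "M \<le> card A"
proof -
  obtain x :: "nat \<Rightarrow> 'a" and R where "inj_on x {..<M}" "\<forall>i<M. x i \<in> A"
    using assms(1) unfolding coding_scheme_def by blast
  then show ?thesis using card_inj_on_le[of x "{..<M}" A] assms(2) by auto
qed

context fchan
begin

lemma Y_ne: "Y \<noteq> {}"
proof
  assume "Y = {}"
  obtain x where "x \<in> A" using Ane by auto
  then have "(U x has_sum 1) {}" using U_sum \<open>Y = {}\<close> by simp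
  then show False using has_sum_empty has_sum_unique by fastforce
qed

lemma K_ge1: "K \<ge> 1" using K_pos Y_ne by simp

lemma ind_has_sum:
  assumes x: "x \<in> A" and S: "S \<subseteq> Z"
  shows "((\<lambda>z. if z \<in> S then V x z else 0) has_sum infsum (V x) S) Z"
proof -
  have "V x summable_on S" using V_sub[OF x S] summable_on_def by blast
  hence "(V x has_sum infsum (V x) S) S" by simp
  then show ?thesis by (subst (asm) has_sum_cong_neutral[where T=Z and g="\<lambda>z. if z \<in> S then V x z else 0"]) (use S in auto)
qed

lemma cap_V_to_U:
  assumes "coding_scheme V A Z M \<epsilon>"
  shows "coding_scheme U A Y M \<epsilon>"
proof -
  obtain x :: "nat \<Rightarrow> 'a" and R :: "nat \<Rightarrow> 'z set" where inj: "inj_on x {..<M}"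
    and xR: "\<forall>i<M. x i \<in> A \<and> R i \<subseteq> Z" and dj: "disjoint_family_on R {..<M}"
    and err: "\<forall>i<M. (\<Sum>\<^sub>\<infinity>y\<in>Z - R i. V (x i) y) \<le> \<epsilon>"
    using assms unfolding coding_scheme_def by blast
  define R' where "R' i = {y\<in>Y. f y \<in> R i}" for i
  show ?thesis unfolding coding_scheme_def
  proof (intro exI[of _ x] exI[of _ R'] conjI allI impI)
    show "inj_on x {..<M}" by fact
    show "disjoint_family_on R' {..<M}" using dj by (auto simp: disjoint_family_on_def R'_def)
    fix i assume i: "i < M"
    show "x i \<in> A" "R' i \<subseteq> Y" using xR i by (auto simp: R'_def)
    have e: "{y\<in>Y. f y \<in> Z - R i} = Y - R' i" by (auto simp: R'_def)
    have "(\<Sum>\<^sub>\<infinity>y\<in>Z - R i. V (x i) y) = (\<Sum>\<^sub>\<infinity>y\<in>Y - R' i. U (x i) y)"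
      using V_sub[of "x i" "Z - R i"] xR i e infsumI by fastforce
    then show "(\<Sum>\<^sub>\<infinity>y\<in>Y - R' i. U (x i) y) \<le> \<epsilon>" using err i by metis
  qed
qed


lemma card_list_le:
  fixes M :: nat and R :: "nat \<Rightarrow> 'y set"
  assumes R: "\<forall>i<M. R i \<subseteq> Y" and dj: "disjoint_family_on R {..<M}"
  shows "card {j\<in>{..<M}. z \<in> f ` R j} \<le> K"
proof -
  define g where "g j = (SOME y. y \<in> R j \<and> f y = z)" for j
  have g: "g j \<in> R j \<and> f (g j) = z" if jj: "j \<in> {j\<in>{..<M}. z \<in> f ` R j}" for j
  proof -
    obtain y where "y \<in> R j" "f y = z" using jj by auto
    then have "y \<in> R j \<and> f y = z" by simp
    then show ?thesis unfolding g_def by (rule someI)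
  qed
  have "inj_on g {j\<in>{..<M}. z \<in> f ` R j}"
  proof (rule inj_onI)
    fix i j assume i: "i \<in> {j\<in>{..<M}. z \<in> f ` R j}" and j: "j \<in> {j\<in>{..<M}. z \<in> f ` R j}" and e: "g i = g j"
    show "i = j"
    proof (rule ccontr)
      assume "i \<noteq> j"
      then have "R i \<inter> R j = {}" using dj i j by (auto simp: disjoint_family_on_def)
      then show False using g[OF i] g[OF j] e by auto
    qed
  qed
  moreover have "g ` {j\<in>{..<M}. z \<in> f ` R j} \<subseteq> F z" using g R by (force simp: F_def)
  ultimately have "card {j\<in>{..<M}. z \<in> f ` R j} \<le> card (F z)"
    using card_inj_on_le[OF _ _ finF] by metis
  then show ?thesis using cardF[of z] by linarith
qed

lemma row_bound:
  fixes M :: nat and R :: "nat \<Rightarrow> 'y set"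
  assumes x: "x \<in> A" and R: "\<forall>i<M. R i \<subseteq> Y" and dj: "disjoint_family_on R {..<M}"
  shows "(\<Sum>j<M. infsum (V x) (f ` R j)) \<le> real K"
proof -
  have sub: "f ` R j \<subseteq> Z" if "j < M" for j using R that by auto
  have h1: "((\<lambda>z. \<Sum>j<M. if z \<in> f ` R j then V x z else 0) has_sum (\<Sum>j<M. infsum (V x) (f ` R j))) Z"
    by (rule has_sum_sum_fin) (auto intro: ind_has_sum[OF x sub])
  have h2: "((\<lambda>z. V x z * real K) has_sum (1 * real K)) Z"
    by (rule has_sum_cmult_left) (use chV x in \<open>simp add: is_channel_def\<close>)
  have pt: "(\<Sum>j<M. if z \<in> f ` R j then V x z else 0) \<le> V x z * real K" for z
  proof -
    have "(\<Sum>j<M. if z \<in> f ` R j then V x z else 0) = V x z * real (card {j\<in>{..<M}. z \<in> f ` R j})"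
      by (simp add: sum.If_cases Int_def conj_commute)
    also have "\<dots> \<le> V x z * real K"
      using card_list_le[OF R dj, of z] V_nn[OF x, of z] by (intro mult_left_mono) auto
    finally show ?thesis .
  qed
  show ?thesis using has_sum_mono[OF h1 h2 pt] by simp
qed

lemma cap_U_to_V:
  assumes code: "coding_scheme U A Y M \<epsilon>" and T: "T \<ge> 1" and M': "2 * T * M' \<le> M"
  shows "coding_scheme V A Z M' (\<epsilon> + 4 * real K / real T)"
proof -
  obtain x :: "nat \<Rightarrow> 'a" and R :: "nat \<Rightarrow> 'y set" where inj: "inj_on x {..<M}"
    and xR: "\<forall>i<M. x i \<in> A \<and> R i \<subseteq> Y" and dj: "disjoint_family_on R {..<M}"
    and err: "\<forall>i<M. (\<Sum>\<^sub>\<infinity>y\<in>Y - R i. U (x i) y) \<le> \<epsilon>"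
    using code unfolding coding_scheme_def by blast
  define Zs where "Zs j = f ` R j" for j
  have ZsZ: "j < M \<Longrightarrow> Zs j \<subseteq> Z" for j using xR by (auto simp: Zs_def)
  define w where "w i j = (if i < M \<and> j < M then infsum (V (x i)) (Zs j) else 0)" for i j
  have wnn: "0 \<le> w i j" for i j
    unfolding w_def using xR V_nn by (auto intro!: infsum_nonneg)
  have row: "(\<Sum>j<M. w i j) \<le> real K" if "i < M" for i
    using row_bound[of "x i" M R] xR dj that by (simp add: w_def Zs_def)
  have Kp: "real K > 0" using K_ge1 by simp
  obtain S where SM: "S \<subseteq> {..<M}" and cS: "real M \<le> 2 * real T * real (card S)"
    and Sw: "\<forall>i\<in>S. (\<Sum>j\<in>S-{i}. w i j) * real T \<le> 4 * real K"
    using select_subcode[of w M "real K" T, OF wnn row T Kp] by blast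
  have M'S: "M' \<le> card S"
  proof -
    have "real (2 * T * M') \<le> real M" using M' by linarith
    hence "2 * real T * real M' \<le> 2 * real T * real (card S)" using cS by simp
    hence "real M' \<le> real (card S)" using T by (simp add: mult_le_cancel_left_pos)
    then show ?thesis by simp
  qed
  have finS: "finite S" using SM finite_subset by blast
  obtain e where e: "bij_betw e {0..<card S} S" using ex_bij_betw_nat_finite[OF finS] by blast
  have eS: "k < card S \<Longrightarrow> e k \<in> S" for k using e by (auto simp: bij_betw_def)
  have einj: "k < card S \<Longrightarrow> l < card S \<Longrightarrow> e k = e l \<Longrightarrow> k = l" for k l
    using e by (auto simp: bij_betw_def inj_on_def)
  define x' where "x' k = x (e k)" for k
  define R' where "R' k = Zs (e k) - (\<Union>j\<in>S-{e k}. Zs j)" for k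
  show ?thesis unfolding coding_scheme_def
  proof (intro exI[of _ x'] exI[of _ R'] conjI allI impI)
    show "inj_on x' {..<M'}"
    proof (rule inj_onI)
      fix k l assume k: "k \<in> {..<M'}" and l: "l \<in> {..<M'}" and xe: "x' k = x' l"
      have kS: "k < card S" "l < card S" using k l M'S by auto
      have "e k < M" "e l < M" using eS[OF kS(1)] eS[OF kS(2)] SM by auto
      then have "e k = e l" using inj xe by (auto simp: x'_def inj_on_def)
      then show "k = l" using einj kS by blast
    qed
    show "disjoint_family_on R' {..<M'}"
      unfolding disjoint_family_on_def
    proof (intro ballI impI)
      fix k l assume k: "k \<in> {..<M'}" and l: "l \<in> {..<M'}" and kl: "k \<noteq> l"
      have kS: "k < card S" "l < card S" using k l M'S by auto
      have "e k \<noteq> e l" using einj kS kl by blast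
      then have "e k \<in> S - {e l}" using eS[OF kS(1)] by auto
      then show "R' k \<inter> R' l = {}" by (auto simp: R'_def)
    qed
    fix k assume k: "k < M'"
    have kS: "k < card S" using k M'S by auto
    define i where "i = e k"
    have iS: "i \<in> S" and iM: "i < M" using eS[OF kS] SM by (auto simp: i_def)
    have xi: "x i \<in> A" using xR iM by auto
    show "x' k \<in> A" using xi by (simp add: x'_def i_def)
    show "R' k \<subseteq> Z" using ZsZ[OF iM] by (auto simp: R'_def i_def[symmetric])
    have sub1: "Z - R' k \<subseteq> Z" by auto
    have sub2: "Z - Zs i \<subseteq> Z" by auto
    have SjM: "j \<in> S - {i} \<Longrightarrow> Zs j \<subseteq> Z" for j using ZsZ SM by auto
    have h0: "((\<lambda>z. if z \<in> Z - R' k then V (x i) z else 0) has_sum infsum (V (x i)) (Z - R' k)) Z"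
      by (rule ind_has_sum[OF xi sub1])
    have h1: "((\<lambda>z. if z \<in> Z - Zs i then V (x i) z else 0) has_sum infsum (V (x i)) (Z - Zs i)) Z"
      by (rule ind_has_sum[OF xi sub2])
    have h2: "((\<lambda>z. \<Sum>j\<in>S-{i}. if z \<in> Zs j then V (x i) z else 0) has_sum (\<Sum>j\<in>S-{i}. infsum (V (x i)) (Zs j))) Z"
      by (rule has_sum_sum_fin) (use finS ind_has_sum[OF xi SjM] in auto)
    have pt: "(if z \<in> Z - R' k then V (x i) z else 0)
        \<le> (if z \<in> Z - Zs i then V (x i) z else 0) + (\<Sum>j\<in>S-{i}. if z \<in> Zs j then V (x i) z else 0)" for z
    proof -
      have A1: "0 \<le> (if z \<in> Z - Zs i then V (x i) z else 0)" using V_nn[OF xi] by simp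
      have A2: "0 \<le> (\<Sum>j\<in>S-{i}. if z \<in> Zs j then V (x i) z else 0)"
        by (rule sum_nonneg) (simp add: V_nn[OF xi])
      show ?thesis
      proof (cases "z \<in> Z - R' k")
        case False
        then have "(if z \<in> Z - R' k then V (x i) z else 0) = 0" by (rule if_not_P)
        then show ?thesis using A1 A2 by linarith
      next
        case True
        then have L: "(if z \<in> Z - R' k then V (x i) z else 0) = V (x i) z" by (rule if_P)
        show ?thesis
        proof (cases "z \<in> Zs i")
          case False
          then have "z \<in> Z - Zs i" using True by simp
          then have "(if z \<in> Z - Zs i then V (x i) z else 0) = V (x i) z" by (rule if_P)
          then show ?thesis using L A2 by linarith
        next
          case zi: True
          then obtain j where j: "j \<in> S - {i}" "z \<in> Zs j" using True by (auto simp: R'_def i_def)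
          have "V (x i) z \<le> (\<Sum>j\<in>S-{i}. if z \<in> Zs j then V (x i) z else 0)"
            using member_le_sum[of j "S - {i}" "\<lambda>j. if z \<in> Zs j then V (x i) z else 0"] j finS V_nn[OF xi] by simp
          then show ?thesis using L A1 by linarith
        qed
      qed
    qed
    have main: "infsum (V (x i)) (Z - R' k) \<le> infsum (V (x i)) (Z - Zs i) + (\<Sum>j\<in>S-{i}. infsum (V (x i)) (Zs j))"
      using has_sum_mono[OF h0 has_sum_add[OF h1 h2] pt] by simp
    have "infsum (V (x i)) (Z - Zs i) = infsum (U (x i)) {y\<in>Y. f y \<in> Z - Zs i}"
      by (rule infsumI[OF V_sub[OF xi sub2]])
    also have "\<dots> \<le> infsum (U (x i)) (Y - R i)"
      by (rule infsum_mono_neutral) (use U_summable[OF xi] U_nn[OF xi] in \<open>auto simp: Zs_def\<close>)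
    also have "\<dots> \<le> \<epsilon>" using err iM by auto
    finally have t1: "infsum (V (x i)) (Z - Zs i) \<le> \<epsilon>" .
    have "(\<Sum>j\<in>S-{i}. infsum (V (x i)) (Zs j)) = (\<Sum>j\<in>S-{i}. w i j)"
      by (rule sum.cong) (use iM SM in \<open>auto simp: w_def\<close>)
    also have "\<dots> \<le> 4 * real K / real T" using Sw iS T by (simp add: pos_le_divide_eq)
    finally have t2: "(\<Sum>j\<in>S-{i}. infsum (V (x i)) (Zs j)) \<le> 4 * real K / real T" .
    have "infsum (V (x i)) (Z - R' k) \<le> \<epsilon> + 4 * real K / real T" using main t1 t2 by linarith
    then show "(\<Sum>\<^sub>\<infinity>y\<in>Z - R' k. V (x' k) y) \<le> \<epsilon> + 4 * real K / real T"
      by (simp add: x'_def i_def)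
  qed
qed

end



context fchan
begin

lemma W1: "is_channel (image_channel f Y U) A Z"
  using chV by (simp add: V_def)

lemma W2:
  assumes "is_dist p A"
  shows "0 \<le> mutual_info U p A Y - mutual_info (image_channel f Y U) p A Z"
    "mutual_info U p A Y - mutual_info (image_channel f Y U) p A Z \<le> log 2 K"
  using mi_diff[OF assms] by (simp_all add: V_def)

lemma W3: "coding_scheme (image_channel f Y U) A Z M \<epsilon> \<Longrightarrow> coding_scheme U A Y M \<epsilon>"
  using cap_V_to_U by (simp add: V_def)

lemma W4: "coding_scheme U A Y M \<epsilon> \<Longrightarrow> T \<ge> 1 \<Longrightarrow> 2 * T * M' \<le> M \<Longrightarrow>
    coding_scheme (image_channel f Y U) A Z M' (\<epsilon> + 4 * real K / real T)"
  using cap_U_to_V by (simp add: V_def)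

lemma W5:
  assumes "is_dist p A" "N > 0"
  shows "(\<Sum>\<^sub>\<infinity>(x,y)\<in>{(x,y)\<in>A \<times> Y. \<bar>info_dens U p A x y / N - I\<bar> > \<delta>}. p x * U x y)
    \<le> (\<Sum>\<^sub>\<infinity>(x,y)\<in>{(x,y)\<in>A \<times> Z. \<bar>info_dens (image_channel f Y U) p A x y / N - I\<bar> > \<delta> / 2}. p x * image_channel f Y U x y)
      + 2 * K * 2 powr (- (N * (\<delta> / 2)))"
    "(\<Sum>\<^sub>\<infinity>(x,y)\<in>{(x,y)\<in>A \<times> Z. \<bar>info_dens (image_channel f Y U) p A x y / N - I\<bar> > \<delta>}. p x * image_channel f Y U x y)
    \<le> (\<Sum>\<^sub>\<infinity>(x,y)\<in>{(x,y)\<in>A \<times> Y. \<bar>info_dens U p A x y / N - I\<bar> > \<delta> / 2}. p x * U x y)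
      + 2 * K * 2 powr (- (N * (\<delta> / 2)))"
  using stab1[OF assms] stab2[OF assms] by (simp_all add: V_def)

end



lemma inputs_eq: "inputs n = {xs. set xs \<subseteq> (UNIV :: 'x set) \<and> length xs = n}"
  by (simp add: inputs_def)

lemma finite_inputs: "finite (inputs n :: ('x::finite) list set)"
  unfolding inputs_eq by (rule finite_lists_length_eq) simp

lemma card_inputs: "card (inputs n :: ('x::finite) list set) = CARD('x) ^ n"
  unfolding inputs_eq by (rule card_lists_length_eq) simp

lemma inputs_ne: "replicate n undefined \<in> inputs n"
  by (simp add: inputs_def)

lemma fchan_inst:
  assumes "finite A" "A \<noteq> {}" "is_channel U A Y"
    and fib: "\<exists>K::nat. \<forall>z. finite {y \<in> Y. f y = z} \<and> card {y \<in> Y. f y = z} \<le> K"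
  shows "fchan A U Y f (Max ((\<lambda>z. card {y\<in>Y. f y = z}) ` (f ` Y)))"
proof -
  obtain K0 :: nat where K0: "\<forall>z. finite {y \<in> Y. f y = z} \<and> card {y \<in> Y. f y = z} \<le> K0" using fib by blast
  have fin: "finite ((\<lambda>z. card {y\<in>Y. f y = z}) ` (f ` Y))"
    by (rule finite_subset[of _ "{..K0}"]) (use K0 in auto)
  show ?thesis
  proof (unfold_locales)
    show "finite A" "A \<noteq> {}" "is_channel U A Y" by fact+
    show "finite {y \<in> Y. f y = z}" for z using K0 by blast
    show "card {y \<in> Y. f y = z} \<le> Max ((\<lambda>z. card {y\<in>Y. f y = z}) ` (f ` Y))" for z
    proof (cases "z \<in> f ` Y")
      case True then show ?thesis by (intro Max_ge fin) auto
    next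
      case False then have e: "{y \<in> Y. f y = z} = {}" by auto
      show ?thesis unfolding e by simp
    qed
  qed
qed

lemma uniform_dist: "finite A \<Longrightarrow> A \<noteq> {} \<Longrightarrow> is_dist (\<lambda>_. 1 / real (card A)) A"
  by (simp add: is_dist_def)

lemma mi_set_props:
  assumes "finite A" "A \<noteq> {}" "is_channel W A B"
  shows "{mutual_info W p A B | p. is_dist p A} \<noteq> {}"
    "bdd_above {mutual_info W p A B | p. is_dist p A}"
    "is_dist p A \<Longrightarrow> mutual_info W p A B \<le> max_info W A B"
proof -
  show ne: "{mutual_info W p A B | p. is_dist p A} \<noteq> {}" using uniform_dist[OF assms(1,2)] by blast
  show bdd: "bdd_above {mutual_info W p A B | p. is_dist p A}"
  proof (rule bdd_aboveI)
    fix m assume "m \<in> {mutual_info W p A B | p. is_dist p A}"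
    then obtain p where "is_dist p A" "m = mutual_info W p A B" by blast
    then show "m \<le> 4 * card A" using chanp.mi_bound[of W A B p] assms by (simp add: chanp_def)
  qed
  show "is_dist p A \<Longrightarrow> mutual_info W p A B \<le> max_info W A B"
    unfolding max_info_def by (rule cSup_upper[OF _ bdd]) blast
qed

lemma max_info_compare:
  assumes A: "finite A" "A \<noteq> {}" and chW: "is_channel W A B" and chW': "is_channel W' A B'"
    and le: "\<And>p. is_dist p A \<Longrightarrow> mutual_info W p A B \<le> mutual_info W' p A B' + c"
  shows "max_info W A B \<le> max_info W' A B' + c"
proof -
  note P = mi_set_props[OF A chW] and P' = mi_set_props[OF A chW']
  have "Sup {mutual_info W p A B | p. is_dist p A} \<le> max_info W' A B' + c"
  proof (rule cSup_least[OF P(1)])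
    fix m assume "m \<in> {mutual_info W p A B | p. is_dist p A}"
    then obtain p where p: "is_dist p A" "m = mutual_info W p A B" by blast
    then show "m \<le> max_info W' A B' + c" using le[OF p(1)] P'(3)[OF p(1)] by linarith
  qed
  then show ?thesis by (simp add: max_info_def)
qed

lemma achievable_zero: "achievable (W :: nat \<Rightarrow> ('x::finite) list \<Rightarrow> 'b \<Rightarrow> real) B 0"
  unfolding achievable_def
proof (intro conjI allI impI exI)
  fix \<epsilon> :: real and n :: nat assume e: "\<epsilon> > 0"
  show "coding_scheme (W n) (inputs n) (B n) (nat \<lceil>2 powr (real n * 0)\<rceil>) \<epsilon>"
    unfolding coding_scheme_def
    by (rule exI[of _ "\<lambda>_. replicate n undefined"], rule exI[of _ "\<lambda>_. B n"])
       (use e in \<open>auto simp: inputs_def disjoint_family_on_def inj_on_def\<close>)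
qed auto

lemma achievable_bound:
  assumes "achievable (W :: nat \<Rightarrow> ('x::finite) list \<Rightarrow> 'b \<Rightarrow> real) B R"
  shows "R \<le> log 2 (real CARD('x))"
proof -
  obtain n0 where n0: "\<forall>n\<ge>n0. coding_scheme (W n) (inputs n) (B n) (nat \<lceil>2 powr (real n * R)\<rceil>) 1"
    using assms unfolding achievable_def by (meson zero_less_one)
  define n where "n = max n0 1"
  have n: "n \<ge> n0" "n \<ge> 1" by (auto simp: n_def)
  have "nat \<lceil>2 powr (real n * R)\<rceil> \<le> card (inputs n :: 'x list set)"
    using coding_card[OF n0[rule_format, OF n(1)] finite_inputs] .
  hence "2 powr (real n * R) \<le> real (CARD('x) ^ n)"
    unfolding card_inputs by simp
  also have "\<dots> = real CARD('x) powr real n" by (simp add: powr_realpow)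
  also have "\<dots> = (2 powr log 2 (real CARD('x))) powr real n" by simp
  also have "\<dots> = 2 powr (real n * log 2 (real CARD('x)))" by (subst powr_powr) (simp add: mult.commute)
  finally have "real n * R \<le> real n * log 2 (real CARD('x))" by simp
  then show ?thesis using n(2) by simp
qed



lemma coding_mono:
  "coding_scheme W A B M e1 \<Longrightarrow> e1 \<le> e2 \<Longrightarrow> coding_scheme W A B M e2"
  unfolding coding_scheme_def by (meson order_trans)

lemma powr_ineq:
  fixes n g R R' c K :: real
  assumes "R' + g = R" "log 2 K \<le> n * g / 2" "log 2 c \<le> n * g / 2" "K > 0" "c > 0"
  shows "c * K * 2 powr (n * R') \<le> 2 powr (n * R)"
proof -
  have "K = 2 powr log 2 K" using assms(4) by simp
  also have "\<dots> \<le> 2 powr (n * g / 2)" using assms(2) by simp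
  finally have k: "K \<le> 2 powr (n * g / 2)" .
  have "c = 2 powr log 2 c" using assms(5) by simp
  also have "\<dots> \<le> 2 powr (n * g / 2)" using assms(3) by simp
  finally have cc: "c \<le> 2 powr (n * g / 2)" .
  have "c * K * 2 powr (n * R') \<le> 2 powr (n * g / 2) * 2 powr (n * g / 2) * 2 powr (n * R')"
    using k cc assms(4,5) by (intro mult_right_mono mult_mono) auto
  also have "\<dots> = 2 powr (n * R)" unfolding assms(1)[symmetric] by (simp add: powr_add[symmetric] algebra_simps)
  finally show ?thesis .
qed

lemma cap_transfer:
  fixes U :: "nat \<Rightarrow> ('x::finite) list \<Rightarrow> 'y \<Rightarrow> real" and K :: "nat \<Rightarrow> nat"
  assumes FC: "\<And>n. n \<ge> 1 \<Longrightarrow> fchan (inputs n) (U n) (Y n) (f n) (K n)"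
    and Phi_lim: "(\<lambda>n. log 2 (real (K n)) / real n) \<longlonglongrightarrow> 0"
    and ach: "achievable U Y R" and R': "0 \<le> R'" "R' < R"
  shows "achievable (\<lambda>n. image_channel (f n) (Y n) (U n)) (\<lambda>n. f n ` Y n) R'"
  unfolding achievable_def
proof (intro conjI allI impI)
  show "0 \<le> R'" by fact
  fix \<epsilon> :: real assume e: "\<epsilon> > 0"
  obtain n0 where n0: "\<forall>n\<ge>n0. coding_scheme (U n) (inputs n) (Y n) (nat \<lceil>2 powr (real n * R)\<rceil>) (\<epsilon> / 2)"
    using ach e unfolding achievable_def by (meson half_gt_zero)
  define g where "g = R - R'"
  have g: "g > 0" using R' by (simp add: g_def)
  define c1 where "c1 = 8 / \<epsilon> + 1"
  have c1: "c1 > 0" using e by (simp add: c1_def add_pos_pos)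
  have ev1: "\<forall>\<^sub>F n in sequentially. log 2 (real (K n)) / real n < g / 2"
  proof -
    have "g / 2 > 0" using g by simp
    from order_tendstoD(2)[OF Phi_lim this] show ?thesis .
  qed
  have ev2: "\<forall>\<^sub>F n in sequentially. n \<ge> nat \<lceil>2 * log 2 (4 * c1) / g\<rceil>"
    by (rule eventually_ge_at_top)
  have ev3: "\<forall>\<^sub>F n in sequentially. n \<ge> max n0 1"
    by (rule eventually_ge_at_top)
  obtain N where N: "\<forall>n\<ge>N. log 2 (real (K n)) / real n < g / 2 \<and> n \<ge> nat \<lceil>2 * log 2 (4 * c1) / g\<rceil> \<and> n \<ge> max n0 1"
    using eventually_conj[OF ev1 eventually_conj[OF ev2 ev3]] unfolding eventually_sequentially by blast
  show "\<exists>n0. \<forall>n\<ge>n0. coding_scheme ((\<lambda>n. image_channel (f n) (Y n) (U n)) n) (inputs n) ((\<lambda>n. f n ` Y n) n)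
                  (nat \<lceil>2 powr (real n * R')\<rceil>) \<epsilon>"
  proof (intro exI[of _ N] allI impI)
    fix n assume nN: "n \<ge> N"
    note Nn = N[rule_format, OF nN]
    have n1: "n \<ge> 1" "n \<ge> n0" using Nn by auto
    interpret FCn: fchan "inputs n" "U n" "Y n" "f n" "K n" using FC[OF n1(1)] .
    have K1: "real (K n) \<ge> 1" using FCn.K_ge1 by simp
    define M where "M = nat \<lceil>2 powr (real n * R)\<rceil>"
    define M' where "M' = nat \<lceil>2 powr (real n * R')\<rceil>"
    define T where "T = nat \<lceil>8 * real (K n) / \<epsilon>\<rceil>"
    have x8: "8 * real (K n) / \<epsilon> > 0" using K1 e by simp
    have T1: "real T \<ge> 8 * real (K n) / \<epsilon>" unfolding T_def by (rule real_nat_ceiling_ge)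
    have T2: "real T \<le> 8 * real (K n) / \<epsilon> + 1" unfolding T_def using x8 by linarith
    have Tge: "T \<ge> 1" using T1 x8 by (cases T) auto
    have Tpos: "real T > 0" using Tge by simp
    have eT: "4 * real (K n) / real T \<le> \<epsilon> / 2"
    proof -
      have "4 * real (K n) \<le> \<epsilon> / 2 * real T" using T1 e by (simp add: field_simps)
      then show ?thesis using Tpos by (simp add: divide_le_eq)
    qed
    have lK: "log 2 (real (K n)) \<le> real n * g / 2"
    proof -
      have "log 2 (real (K n)) / real n < g / 2" using Nn by simp
      then show ?thesis using n1 by (simp add: divide_less_eq mult.commute)
    qed
    have lc: "log 2 (4 * c1) \<le> real n * g / 2"
    proof -
      have "real n \<ge> 2 * log 2 (4 * c1) / g" using Nn by (metis nat_ceiling_le_eq)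
      then show ?thesis using g by (simp add: divide_le_eq mult.commute)
    qed
    have p1: "1 \<le> 2 powr (real n * R')" by (rule ge_one_powr_ge_zero) (use R' in auto)
    have M'le: "real M' \<le> 2 * 2 powr (real n * R')"
    proof -
      have "real M' \<le> 2 powr (real n * R') + 1" unfolding M'_def
        using ceiling_correct[of "2 powr (real n * R')"] of_nat_int_ceiling[of "2 powr (real n * R')"] by simp
      then show ?thesis using p1 by linarith
    qed
    have "real (2 * T * M') = 2 * real T * real M'" by simp
    also have "\<dots> \<le> 2 * (real (K n) * c1) * (2 * 2 powr (real n * R'))"
    proof (rule mult_mono)
      have "real (K n) * c1 = 8 * real (K n) / \<epsilon> + real (K n)" by (simp add: c1_def distrib_left)
      then show "2 * real T \<le> 2 * (real (K n) * c1)" using T2 K1 by linarith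
    qed (use M'le e c1 K1 in auto)
    also have "\<dots> = (4 * c1) * real (K n) * 2 powr (real n * R')" by simp
    also have "\<dots> \<le> 2 powr (real n * R)"
      by (rule powr_ineq[of R' g R]) (use g_def lK lc K1 c1 in auto)
    also have "\<dots> \<le> real M" unfolding M_def by (rule real_nat_ceiling_ge)
    finally have TM: "2 * T * M' \<le> M" by linarith
    have "coding_scheme (image_channel (f n) (Y n) (U n)) (inputs n) (f n ` Y n) M' (\<epsilon> / 2 + 4 * real (K n) / real T)"
      by (rule FCn.W4[OF _ Tge TM]) (use n0 n1 in \<open>simp add: M_def\<close>)
    then show "coding_scheme ((\<lambda>n. image_channel (f n) (Y n) (U n)) n) (inputs n) ((\<lambda>n. f n ` Y n) n) M' \<epsilon>"
      by (rule coding_mono) (use eT in simp)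
  qed
qed



lemma pow_lim:
  assumes c: "c > 0"
  shows "(\<lambda>n. 2 powr (- (real n * c))) \<longlonglongrightarrow> 0"
proof -
  have e: "2 powr (- (real n * c)) = (2 powr (- c)) ^ n" for n
  proof -
    have "2 powr (- (real n * c)) = (2 powr (- c)) powr real n" by (simp add: powr_powr mult.commute)
    also have "\<dots> = (2 powr (- c)) ^ n" by (rule powr_realpow) simp
    finally show ?thesis .
  qed
  have "(2::real) powr (- c) < 2 powr 0" by (rule powr_less_mono) (use c in auto)
  hence "norm (2 powr (- c) :: real) < 1" by simp
  then show ?thesis unfolding e by (rule LIMSEQ_power_zero)
qed

lemma Kpow_lim:
  fixes K :: "nat \<Rightarrow> nat"
  assumes K1: "\<And>n. n \<ge> 1 \<Longrightarrow> K n \<ge> 1"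
    and Phi_lim: "(\<lambda>n. log 2 (real (K n)) / real n) \<longlonglongrightarrow> 0" and c: "c > 0"
  shows "(\<lambda>n. 2 * real (K n) * 2 powr (- (real n * c))) \<longlonglongrightarrow> 0"
proof (rule tendsto_sandwich[of "\<lambda>_. 0" _ _ "\<lambda>n. 2 * 2 powr (- (real n * (c / 2)))"])
  show "\<forall>\<^sub>F n in sequentially. 0 \<le> 2 * real (K n) * 2 powr (- (real n * c))" by simp
  have "c / 2 > 0" using c by simp
  from order_tendstoD(2)[OF Phi_lim this]
  have ev: "\<forall>\<^sub>F n in sequentially. log 2 (real (K n)) / real n < c / 2" .
  show "\<forall>\<^sub>F n in sequentially. 2 * real (K n) * 2 powr (- (real n * c)) \<le> 2 * 2 powr (- (real n * (c / 2)))"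
    using eventually_conj[OF ev eventually_ge_at_top[of 1]]
  proof (rule eventually_mono)
    fix n :: nat assume h: "log 2 (real (K n)) / real n < c / 2 \<and> 1 \<le> n"
    have Kp: "real (K n) > 0" using K1 h by (simp add: Suc_le_eq)
    have np: "real n > 0" using h by simp
    have "log 2 (real (K n)) < c / 2 * real n" using h pos_divide_less_eq[OF np] by blast
    hence l: "log 2 (real (K n)) \<le> real n * (c / 2)" by (simp add: mult.commute)
    have "real (K n) * 2 powr (- (real n * c)) = 2 powr (log 2 (real (K n)) - real n * c)"
      using Kp by (simp add: powr_diff powr_minus divide_inverse)
    also have "\<dots> \<le> 2 powr (- (real n * (c / 2)))" using l by simp
    finally show "2 * real (K n) * 2 powr (- (real n * c)) \<le> 2 * 2 powr (- (real n * (c / 2)))" by simp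
  qed
  show "(\<lambda>n. 2 * 2 powr (- (real n * (c / 2)))) \<longlonglongrightarrow> 0"
    using tendsto_mult_right_zero[OF pow_lim[of "c / 2"]] c by simp
qed simp


theorem proposition5:
  fixes U :: "nat \<Rightarrow> ('x::finite) list \<Rightarrow> 'y \<Rightarrow> real"
    and Y :: "nat \<Rightarrow> 'y set"
    and f :: "nat \<Rightarrow> 'y \<Rightarrow> 'z"
    and V :: "nat \<Rightarrow> 'x list \<Rightarrow> 'z \<Rightarrow> real"
  assumes chan: "\<And>n. n \<ge> 1 \<Longrightarrow> is_channel (U n) (inputs n) (Y n)"
    and V_def: "\<And>n. V n = image_channel (f n) (Y n) (U n)"
    and fib: "\<And>n. \<exists>K::nat. \<forall>z. finite {y \<in> Y n. f n y = z} \<and> card {y \<in> Y n. f n y = z} \<le> K"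
    and Phi_lim: "(\<lambda>n. Phi (f n) (Y n) / real n) \<longlonglongrightarrow> 0"
  shows "capacity U Y = capacity V (\<lambda>n. f n ` Y n)
    \<and> ((info_rate_exists U Y \<or> info_rate_exists V (\<lambda>n. f n ` Y n)) \<longrightarrow>
         info_rate_exists U Y \<and> info_rate_exists V (\<lambda>n. f n ` Y n) \<and>
         info_rate U Y = info_rate V (\<lambda>n. f n ` Y n))
    \<and> (strictly_info_stable U Y \<longleftrightarrow> strictly_info_stable V (\<lambda>n. f n ` Y n))"
proof -
  define K where "K n = Max ((\<lambda>z. card {y\<in>Y n. f n y = z}) ` (f n ` Y n))" for n
  have FC: "fchan (inputs n) (U n) (Y n) (f n) (K n)" if "n \<ge> 1" for n
    unfolding K_def by (rule fchan_inst[OF finite_inputs _ chan[OF that] fib]) (use inputs_ne in blast)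
  have PhiK: "Phi (f n) (Y n) = log 2 (real (K n))" for n by (simp add: Phi_def K_def)
  have Phi_lim': "(\<lambda>n. log 2 (real (K n)) / real n) \<longlonglongrightarrow> 0" using Phi_lim by (simp add: PhiK)
  have K1: "K n \<ge> 1" if "n \<ge> 1" for n using fchan.K_ge1[OF FC[OF that]] .
  have chV: "is_channel (V n) (inputs n) (f n ` Y n)" if "n \<ge> 1" for n
    using fchan.W1[OF FC[OF that]] V_def by simp
  have Veq: "V = (\<lambda>n. image_channel (f n) (Y n) (U n))" by (rule ext) (rule V_def)

  have cap: "capacity U Y = capacity V (\<lambda>n. f n ` Y n)"
  proof -
    let ?AU = "{R. achievable U Y R}"
    let ?AV = "{R. achievable V (\<lambda>n. f n ` Y n) R}"
    have bU: "bdd_above ?AU"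
      by (rule bdd_aboveI[of _ "log 2 (real CARD('x))"]) (auto intro: achievable_bound)
    have bV: "bdd_above ?AV"
      by (rule bdd_aboveI[of _ "log 2 (real CARD('x))"]) (auto intro: achievable_bound)
    have zU: "0 \<in> ?AU" using achievable_zero by blast
    have zV: "0 \<in> ?AV" using achievable_zero by blast
    have sub: "?AV \<subseteq> ?AU"
    proof
      fix R assume "R \<in> ?AV"
      hence a: "achievable V (\<lambda>n. f n ` Y n) R" by simp
      show "R \<in> ?AU" unfolding mem_Collect_eq achievable_def
      proof (intro conjI allI impI)
        show "0 \<le> R" using a by (simp add: achievable_def)
        fix \<epsilon> :: real assume e: "\<epsilon> > 0"
        obtain n0 where n0: "\<forall>n\<ge>n0. coding_scheme (V n) (inputs n) (f n ` Y n) (nat \<lceil>2 powr (real n * R)\<rceil>) \<epsilon>"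
          using a e unfolding achievable_def by blast
        show "\<exists>n0. \<forall>n\<ge>n0. coding_scheme (U n) (inputs n) (Y n) (nat \<lceil>2 powr (real n * R)\<rceil>) \<epsilon>"
        proof (intro exI[of _ "max n0 1"] allI impI)
          fix n assume n: "max n0 1 \<le> n"
          hence n1: "n \<ge> 1" "n \<ge> n0" by auto
          show "coding_scheme (U n) (inputs n) (Y n) (nat \<lceil>2 powr (real n * R)\<rceil>) \<epsilon>"
            by (rule fchan.W3[OF FC[OF n1(1)]]) (use n0 n1(2) V_def in simp)
        qed
      qed
    qed
    have sup: "R' \<in> ?AV" if "R \<in> ?AU" "0 \<le> R'" "R' < R" for R R'
      using cap_transfer[OF FC Phi_lim', of R R'] that by (simp add: Veq)
    show ?thesis unfolding capacity_def
    proof (rule antisym)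
      show "Sup ?AU \<le> Sup ?AV"
      proof (rule cSup_least)
        show "?AU \<noteq> {}" using zU by blast
        fix R assume R: "R \<in> ?AU"
        have R0: "0 \<le> R" using R by (simp add: achievable_def)
        show "R \<le> Sup ?AV"
        proof (cases "R = 0")
          case True then show ?thesis using cSup_upper[OF zV bV] by simp
        next
          case False then have "0 < R" using R0 by simp
          then show ?thesis
          proof (rule dense_le_bounded)
            fix w assume "0 < w" "w < R"
            then have "w \<in> ?AV" using sup[OF R] by auto
            then show "w \<le> Sup ?AV" by (rule cSup_upper[OF _ bV])
          qed
        qed
      qed
      show "Sup ?AV \<le> Sup ?AU" by (rule cSup_subset_mono[OF _ bU sub]) (use zV in blast)
    qed
  qed

  define a where "a n = max_info (U n) (inputs n) (Y n)" for n
  define b where "b n = max_info (V n) (inputs n) (f n ` Y n)" for n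
  have ab: "b n \<le> a n \<and> a n \<le> b n + log 2 (real (K n))" if n: "n \<ge> 1" for n
  proof -
    have chU: "is_channel (U n) (inputs n) (Y n)" using chan n .
    have fi1: "finite (inputs n :: 'x list set)" by (rule finite_inputs)
    have fi2: "(inputs n :: 'x list set) \<noteq> {}" using inputs_ne by blast
    note fi = fi1 fi2
    have d: "0 \<le> mutual_info (U n) p (inputs n) (Y n) - mutual_info (V n) p (inputs n) (f n ` Y n)"
       "mutual_info (U n) p (inputs n) (Y n) - mutual_info (V n) p (inputs n) (f n ` Y n) \<le> log 2 (real (K n))"
      if "is_dist p (inputs n)" for p
      using fchan.W2[OF FC[OF n] that] V_def by simp_all
    have "b n \<le> a n + 0" unfolding a_def b_def
      by (rule max_info_compare[OF fi chV[OF n] chU]) (use d in force)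
    moreover have "a n \<le> b n + log 2 (real (K n))" unfolding a_def b_def
      by (rule max_info_compare[OF fi chU chV[OF n]]) (use d in force)
    ultimately show ?thesis by simp
  qed
  have dlim: "(\<lambda>n. (a n - b n) / real n) \<longlonglongrightarrow> 0"
  proof (rule tendsto_sandwich[of "\<lambda>_. 0" _ _ "\<lambda>n. log 2 (real (K n)) / real n"])
    show "\<forall>\<^sub>F n in sequentially. 0 \<le> (a n - b n) / real n"
      using eventually_ge_at_top[of 1] by (rule eventually_mono) (use ab in simp)
    show "\<forall>\<^sub>F n in sequentially. (a n - b n) / real n \<le> log 2 (real (K n)) / real n"
      using eventually_ge_at_top[of 1]
    proof (rule eventually_mono)
      fix n :: nat assume n: "n \<ge> 1"
      have "a n - b n \<le> log 2 (real (K n))" using ab[OF n] by linarith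
      then show "(a n - b n) / real n \<le> log 2 (real (K n)) / real n" by (rule divide_right_mono) simp
    qed
  qed (simp_all add: Phi_lim')
  have eq1: "b n / real n = a n / real n - (a n - b n) / real n" for n by (simp add: diff_divide_distrib)
  have eq2: "a n / real n = b n / real n + (a n - b n) / real n" for n by (simp add: diff_divide_distrib)
  have rate: "info_rate_exists U Y \<or> info_rate_exists V (\<lambda>n. f n ` Y n) \<Longrightarrow>
         info_rate_exists U Y \<and> info_rate_exists V (\<lambda>n. f n ` Y n) \<and>
         info_rate U Y = info_rate V (\<lambda>n. f n ` Y n)"
  proof -
    assume h: "info_rate_exists U Y \<or> info_rate_exists V (\<lambda>n. f n ` Y n)"
    obtain L where L1: "(\<lambda>n. a n / real n) \<longlonglongrightarrow> L" and L2: "(\<lambda>n. b n / real n) \<longlonglongrightarrow> L"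
    proof (cases "info_rate_exists U Y")
      case True
      then obtain L where L: "(\<lambda>n. a n / real n) \<longlonglongrightarrow> L"
        unfolding info_rate_exists_def convergent_def a_def by blast
      have "(\<lambda>n. b n / real n) \<longlonglongrightarrow> L - 0" unfolding eq1 by (rule tendsto_diff[OF L dlim])
      then show ?thesis using that L by simp
    next
      case False
      then have "info_rate_exists V (\<lambda>n. f n ` Y n)" using h by blast
      then obtain L where L: "(\<lambda>n. b n / real n) \<longlonglongrightarrow> L"
        unfolding info_rate_exists_def convergent_def b_def by blast
      have "(\<lambda>n. a n / real n) \<longlonglongrightarrow> L + 0" unfolding eq2 by (rule tendsto_add[OF L dlim])
      then show ?thesis using that L by simp
    qed
    then show ?thesis
      unfolding info_rate_exists_def info_rate_def convergent_def a_def[symmetric] b_def[symmetric]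
      using limI by auto
  qed

  have pd_nn: "0 \<le> p x" if "is_dist p A" "x \<in> A" for p :: "'x list \<Rightarrow> real" and A x
    using that by (simp add: is_dist_def)

  have UV: "strictly_info_stable V (\<lambda>n. f n ` Y n)" if h: "strictly_info_stable U Y"
  proof -
    have ex: "info_rate_exists U Y" using h by (simp add: strictly_info_stable_def)
    obtain p where pd: "\<forall>n. is_dist (p n) (inputs n)" and
      lim: "\<forall>\<delta>>0. (\<lambda>n. \<Sum>\<^sub>\<infinity>(x,y)\<in>{(x,y)\<in>inputs n \<times> Y n.
              \<bar>info_dens (U n) (p n) (inputs n) x y / real n - info_rate U Y\<bar> > \<delta>}.
              p n x * U n x y) \<longlonglongrightarrow> 0"
      using h unfolding strictly_info_stable_def by blast
    have exV: "info_rate_exists V (\<lambda>n. f n ` Y n)" and req: "info_rate U Y = info_rate V (\<lambda>n. f n ` Y n)"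
      using rate ex by auto
    show ?thesis unfolding strictly_info_stable_def
    proof (intro conjI exI[of _ p] allI impI)
      show "info_rate_exists V (\<lambda>n. f n ` Y n)" by (rule exV)
      show "is_dist (p n) (inputs n)" for n using pd by blast
      fix \<delta> :: real assume d: "\<delta> > 0"
      have d2: "\<delta> / 2 > 0" using d by simp
      show "(\<lambda>n. \<Sum>\<^sub>\<infinity>(x,y)\<in>{(x,y)\<in>inputs n \<times> f n ` Y n.
              \<bar>info_dens (V n) (p n) (inputs n) x y / real n - info_rate V (\<lambda>n. f n ` Y n)\<bar> > \<delta>}.
              p n x * V n x y) \<longlonglongrightarrow> 0"
      proof (rule tendsto_sandwich[of "\<lambda>_. 0" _ _ "\<lambda>n. (\<Sum>\<^sub>\<infinity>(x,y)\<in>{(x,y)\<in>inputs n \<times> Y n.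
              \<bar>info_dens (U n) (p n) (inputs n) x y / real n - info_rate U Y\<bar> > \<delta> / 2}.
              p n x * U n x y) + 2 * real (K n) * 2 powr (- (real n * (\<delta> / 2)))"])
        show "\<forall>\<^sub>F n in sequentially. 0 \<le> (\<Sum>\<^sub>\<infinity>(x,y)\<in>{(x,y)\<in>inputs n \<times> f n ` Y n.
              \<bar>info_dens (V n) (p n) (inputs n) x y / real n - info_rate V (\<lambda>n. f n ` Y n)\<bar> > \<delta>}.
              p n x * V n x y)"
          using eventually_ge_at_top[of 1]
        proof (rule eventually_mono)
          fix n :: nat assume n: "n \<ge> 1"
          show "0 \<le> (\<Sum>\<^sub>\<infinity>(x,y)\<in>{(x,y)\<in>inputs n \<times> f n ` Y n.
              \<bar>info_dens (V n) (p n) (inputs n) x y / real n - info_rate V (\<lambda>n. f n ` Y n)\<bar> > \<delta>}.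
              p n x * V n x y)"
            by (rule infsum_nonneg) (use pd chV[OF n] in \<open>auto simp: is_channel_def is_dist_def\<close>)
        qed
        show "\<forall>\<^sub>F n in sequentially. (\<Sum>\<^sub>\<infinity>(x,y)\<in>{(x,y)\<in>inputs n \<times> f n ` Y n.
              \<bar>info_dens (V n) (p n) (inputs n) x y / real n - info_rate V (\<lambda>n. f n ` Y n)\<bar> > \<delta>}.
              p n x * V n x y) \<le> (\<Sum>\<^sub>\<infinity>(x,y)\<in>{(x,y)\<in>inputs n \<times> Y n.
              \<bar>info_dens (U n) (p n) (inputs n) x y / real n - info_rate U Y\<bar> > \<delta> / 2}.
              p n x * U n x y) + 2 * real (K n) * 2 powr (- (real n * (\<delta> / 2)))"
          using eventually_ge_at_top[of 1]
        proof (rule eventually_mono)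
          fix n :: nat assume n: "n \<ge> 1"
          have N: "real n > 0" using n by simp
          show "(\<Sum>\<^sub>\<infinity>(x,y)\<in>{(x,y)\<in>inputs n \<times> f n ` Y n.
              \<bar>info_dens (V n) (p n) (inputs n) x y / real n - info_rate V (\<lambda>n. f n ` Y n)\<bar> > \<delta>}.
              p n x * V n x y) \<le> (\<Sum>\<^sub>\<infinity>(x,y)\<in>{(x,y)\<in>inputs n \<times> Y n.
              \<bar>info_dens (U n) (p n) (inputs n) x y / real n - info_rate U Y\<bar> > \<delta> / 2}.
              p n x * U n x y) + 2 * real (K n) * 2 powr (- (real n * (\<delta> / 2)))"
            using fchan.W5(2)[OF FC[OF n] pd[rule_format] N, where I="info_rate U Y" and \<delta>=\<delta>]
            unfolding V_def[symmetric] req by simp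
        qed
        show "(\<lambda>n. (\<Sum>\<^sub>\<infinity>(x,y)\<in>{(x,y)\<in>inputs n \<times> Y n.
              \<bar>info_dens (U n) (p n) (inputs n) x y / real n - info_rate U Y\<bar> > \<delta> / 2}.
              p n x * U n x y) + 2 * real (K n) * 2 powr (- (real n * (\<delta> / 2)))) \<longlonglongrightarrow> 0"
          using tendsto_add[OF lim[rule_format, OF d2] Kpow_lim[OF K1 Phi_lim' d2]] by simp
      qed simp
    qed
  qed

  have VU: "strictly_info_stable U Y" if h: "strictly_info_stable V (\<lambda>n. f n ` Y n)"
  proof -
    have ex: "info_rate_exists V (\<lambda>n. f n ` Y n)" using h by (simp add: strictly_info_stable_def)
    obtain p where pd: "\<forall>n. is_dist (p n) (inputs n)" and
      lim: "\<forall>\<delta>>0. (\<lambda>n. \<Sum>\<^sub>\<infinity>(x,y)\<in>{(x,y)\<in>inputs n \<times> f n ` Y n.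
              \<bar>info_dens (V n) (p n) (inputs n) x y / real n - info_rate V (\<lambda>n. f n ` Y n)\<bar> > \<delta>}.
              p n x * V n x y) \<longlonglongrightarrow> 0"
      using h unfolding strictly_info_stable_def by blast
    have exU: "info_rate_exists U Y" and req: "info_rate U Y = info_rate V (\<lambda>n. f n ` Y n)"
      using rate ex by auto
    show ?thesis unfolding strictly_info_stable_def
    proof (intro conjI exI[of _ p] allI impI)
      show "info_rate_exists U Y" by (rule exU)
      show "is_dist (p n) (inputs n)" for n using pd by blast
      fix \<delta> :: real assume d: "\<delta> > 0"
      have d2: "\<delta> / 2 > 0" using d by simp
      show "(\<lambda>n. \<Sum>\<^sub>\<infinity>(x,y)\<in>{(x,y)\<in>inputs n \<times> Y n.
              \<bar>info_dens (U n) (p n) (inputs n) x y / real n - info_rate U Y\<bar> > \<delta>}.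
              p n x * U n x y) \<longlonglongrightarrow> 0"
      proof (rule tendsto_sandwich[of "\<lambda>_. 0" _ _ "\<lambda>n. (\<Sum>\<^sub>\<infinity>(x,y)\<in>{(x,y)\<in>inputs n \<times> f n ` Y n.
              \<bar>info_dens (V n) (p n) (inputs n) x y / real n - info_rate V (\<lambda>n. f n ` Y n)\<bar> > \<delta> / 2}.
              p n x * V n x y) + 2 * real (K n) * 2 powr (- (real n * (\<delta> / 2)))"])
        show "\<forall>\<^sub>F n in sequentially. 0 \<le> (\<Sum>\<^sub>\<infinity>(x,y)\<in>{(x,y)\<in>inputs n \<times> Y n.
              \<bar>info_dens (U n) (p n) (inputs n) x y / real n - info_rate U Y\<bar> > \<delta>}.
              p n x * U n x y)"
          using eventually_ge_at_top[of 1]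
        proof (rule eventually_mono)
          fix n :: nat assume n: "n \<ge> 1"
          show "0 \<le> (\<Sum>\<^sub>\<infinity>(x,y)\<in>{(x,y)\<in>inputs n \<times> Y n.
              \<bar>info_dens (U n) (p n) (inputs n) x y / real n - info_rate U Y\<bar> > \<delta>}.
              p n x * U n x y)"
            by (rule infsum_nonneg) (use pd chan[OF n] in \<open>auto simp: is_channel_def is_dist_def\<close>)
        qed
        show "\<forall>\<^sub>F n in sequentially. (\<Sum>\<^sub>\<infinity>(x,y)\<in>{(x,y)\<in>inputs n \<times> Y n.
              \<bar>info_dens (U n) (p n) (inputs n) x y / real n - info_rate U Y\<bar> > \<delta>}.
              p n x * U n x y) \<le> (\<Sum>\<^sub>\<infinity>(x,y)\<in>{(x,y)\<in>inputs n \<times> f n ` Y n.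
              \<bar>info_dens (V n) (p n) (inputs n) x y / real n - info_rate V (\<lambda>n. f n ` Y n)\<bar> > \<delta> / 2}.
              p n x * V n x y) + 2 * real (K n) * 2 powr (- (real n * (\<delta> / 2)))"
          using eventually_ge_at_top[of 1]
        proof (rule eventually_mono)
          fix n :: nat assume n: "n \<ge> 1"
          have N: "real n > 0" using n by simp
          show "(\<Sum>\<^sub>\<infinity>(x,y)\<in>{(x,y)\<in>inputs n \<times> Y n.
              \<bar>info_dens (U n) (p n) (inputs n) x y / real n - info_rate U Y\<bar> > \<delta>}.
              p n x * U n x y) \<le> (\<Sum>\<^sub>\<infinity>(x,y)\<in>{(x,y)\<in>inputs n \<times> f n ` Y n.
              \<bar>info_dens (V n) (p n) (inputs n) x y / real n - info_rate V (\<lambda>n. f n ` Y n)\<bar> > \<delta> / 2}.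
              p n x * V n x y) + 2 * real (K n) * 2 powr (- (real n * (\<delta> / 2)))"
            using fchan.W5(1)[OF FC[OF n] pd[rule_format] N, where I="info_rate U Y" and \<delta>=\<delta>]
            unfolding V_def[symmetric] req by simp
        qed
        show "(\<lambda>n. (\<Sum>\<^sub>\<infinity>(x,y)\<in>{(x,y)\<in>inputs n \<times> f n ` Y n.
              \<bar>info_dens (V n) (p n) (inputs n) x y / real n - info_rate V (\<lambda>n. f n ` Y n)\<bar> > \<delta> / 2}.
              p n x * V n x y) + 2 * real (K n) * 2 powr (- (real n * (\<delta> / 2)))) \<longlonglongrightarrow> 0"
          using tendsto_add[OF lim[rule_format, OF d2] Kpow_lim[OF K1 Phi_lim' d2]] by simp
      qed simp
    qed
  qed

  show ?thesis using cap rate UV VU by blast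
qed



end
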